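(* Let $\eta$ be a weight of class $*$ and let $\{\psi_\lambda\}_{\lambda\in\Lambda}$ be a UCPU of class $*-\dagger$ with points $\{y_\lambda\}_{\lambda\in\Lambda}$. In the Beurling case, for every $h>0$, and in the Roumieu case, for some $h>0$, $$\sup_{\lambda,\mu\in\Lambda}e^{A(h|y_\lambda-y_\mu|)}\|\psi_\lambda\psi_\mu\|_{\mathcal FL^1_\eta}<\infty.$$
   Context: $\{M_p\}_{p\in\mathbb N}$, $\{A_p\}_{p\in\mathbb N}$ are sequences of positive numbers with $M_0=M_1=A_0=A_1=1$, both satisfying (M.1) $M_p^2\le M_{p-1}M_{p+1}$ ($p\ge1$), (M.2) $M_{p+q}\le c_0H^{p+q}M_pM_q$ for some $c_0,H\ge1$, (M.6) $p!\le c_0L_0^pM_p$ for some $c_0,L_0\ge1$; $\{A_p\}$ moreover satisfies (M.2)$^*$: $2m_p\le m_{pN}$ for $p\ge p_0$, some $p_0,N\in\mathbb Z_+$, $m_j=A_j/A_{j-1}$. $M_\alpha=M_{|\alpha|}$; associated functions $M(\rho)=\sup_p\ln(\rho^p/M_p)$, $A(\rho)=\sup_p\ln(\rho^p/A_p)$. $\mathcal S^{M_p,h}_{A_p,h}(\mathbb R^n)$ ($h>0$) is the Banach space of smooth $\varphi$ with $\sup_\alpha h^{|\alpha|}\|e^{A(h|\cdot|)}\partial^\alpha\varphi\|_{L^\infty}/M_\alpha<\infty$; $\mathcal S^*_\dagger(\mathbb R^n)$ denotes the Beurling space (projective limit as $h\to\infty$) or the Roumieu space (inductive limit as $h\to0^+$).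 A measurable $\eta:\mathbb R^n\to(0,\infty)$ is a weight of class $*$ if there are $C,\tau>0$ (Beurling; Roumieu: for every $\tau>0$ some $C>0$) with $\eta(x+y)\le C\eta(x)e^{M(\tau|y|)}$. $\mathcal FL^1_\eta=\{\mathcal Ff: \eta f\in L^1\}$ with $\|\mathcal Ff\|_{\mathcal FL^1_\eta}=\|\eta f\|_{L^1}$, where $\mathcal Ff(\xi)=\int e^{-2\pi ix\cdot\xi}f(x)dx$. A UCPU of class $*-\dagger$ is a family $\{\psi_\lambda\}_{\lambda\in\Lambda}\subseteq\mathcal S^*_\dagger(\mathbb R^n)$, $\Lambda$ countable, with points $\{y_\lambda\}\subseteq\mathbb R^n$ such that: (1) for every $h>0$ (Beurling; Roumieu: for some $h>0$) $\sup_{\lambda,\alpha,x} h^{|\alpha|}|\partial^\alpha\psi_\lambda(x)|e^{A(h|x-y_\lambda|)}/M_\alpha<\infty$; (2) for every compact $K$ there is $C_K$ with $\sup_x|\{\lambda: x\in y_\lambda+K\}|\le C_K$; (3) there is a bounded open neighbourhood $U$ of $0$ with $\mathbb R^n=\bigcup_\lambda(y_\lambda+U)$; (4) $\sum_\lambda\psi_\lambda=1$ on $\mathbb R^n$. *)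

theory Defs
  imports "HOL-Analysis.Analysis"
begin

text \<open>Beurling / Roumieu alternative, written * in the paper.\<close>
datatype ultra_case = Beurling | Roumieu

text \<open>Weight sequences: positivity, normalisation M0 = M1 = 1, (M.1), (M.2), (M.6).\<close>
definition weight_sequence :: "(nat \<Rightarrow> real) \<Rightarrow> bool" where
  "weight_sequence M \<longleftrightarrow>
     (\<forall>p. M p > 0) \<and> M 0 = 1 \<and> M 1 = 1 \<and>
     (\<forall>p\<ge>1. (M p)\<^sup>2 \<le> M (p - 1) * M (p + 1)) \<and>
     (\<exists>c0 H. c0 \<ge> 1 \<and> H \<ge> 1 \<and> (\<forall>p q. M (p + q) \<le> c0 * H ^ (p + q) * M p * M q)) \<and>
     (\<exists>c0 L0. c0 \<ge> 1 \<and> L0 \<ge> 1 \<and> (\<forall>p. fact p \<le> c0 * L0 ^ p * M p))"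

definition cond_M2_star :: "(nat \<Rightarrow> real) \<Rightarrow> bool" where
  "cond_M2_star A \<longleftrightarrow>
     (\<exists>p0 N::nat. p0 \<ge> 1 \<and> N \<ge> 1 \<and>
        (\<forall>p\<ge>p0. 2 * (A p / A (p - 1)) \<le> A (p * N) / A (p * N - 1)))"

definition assoc_fun :: "(nat \<Rightarrow> real) \<Rightarrow> real \<Rightarrow> real" where
  "assoc_fun M \<rho> = (SUP p. ln (\<rho> ^ p / M p))"

text \<open>Directional derivative along b, and iterated partial derivatives along a list
  of basis vectors (for smooth functions this gives all \<partial>^\<alpha>, |\<alpha>| = length of the list).\<close>
definition dir_deriv :: "'a::euclidean_space \<Rightarrow> ('a \<Rightarrow> complex) \<Rightarrow> 'a \<Rightarrow> complex" where
  "dir_deriv b f x = vector_derivative (\<lambda>t::real. f (x + t *\<^sub>R b)) (at 0)"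

fun iter_deriv :: "'a::euclidean_space list \<Rightarrow> ('a \<Rightarrow> complex) \<Rightarrow> 'a \<Rightarrow> complex" where
  "iter_deriv [] f = f"
| "iter_deriv (b # bs) f = dir_deriv b (iter_deriv bs f)"

definition smooth_fun :: "('a::euclidean_space \<Rightarrow> complex) \<Rightarrow> bool" where
  "smooth_fun f \<longleftrightarrow> (\<forall>bs. set bs \<subseteq> Basis \<longrightarrow> (\<forall>x. iter_deriv bs f differentiable at x))"

definition S_bounded :: "(nat \<Rightarrow> real) \<Rightarrow> (nat \<Rightarrow> real) \<Rightarrow> real \<Rightarrow> ('a::euclidean_space \<Rightarrow> complex) \<Rightarrow> bool" where
  "S_bounded M A h \<phi> \<longleftrightarrow>
     (\<exists>C. \<forall>bs x. set bs \<subseteq> Basis \<longrightarrow>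
        h ^ length bs * norm (iter_deriv bs \<phi> x) * exp (assoc_fun A (h * norm x)) / M (length bs) \<le> C)"

definition in_S :: "ultra_case \<Rightarrow> (nat \<Rightarrow> real) \<Rightarrow> (nat \<Rightarrow> real) \<Rightarrow> ('a::euclidean_space \<Rightarrow> complex) \<Rightarrow> bool" where
  "in_S c M A \<phi> \<longleftrightarrow> smooth_fun \<phi> \<and>
     (case c of Beurling \<Rightarrow> (\<forall>h>0. S_bounded M A h \<phi>)
              | Roumieu \<Rightarrow> (\<exists>h>0. S_bounded M A h \<phi>))"

definition weight_of_class :: "ultra_case \<Rightarrow> (nat \<Rightarrow> real) \<Rightarrow> ('a::euclidean_space \<Rightarrow> real) \<Rightarrow> bool" where
  "weight_of_class c M \<eta> \<longleftrightarrow> \<eta> \<in> borel_measurable lborel \<and> (\<forall>x. \<eta> x > 0) \<and>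
     (case c of
        Beurling \<Rightarrow> (\<exists>C \<tau>. C > 0 \<and> \<tau> > 0 \<and> (\<forall>x y. \<eta> (x + y) \<le> C * \<eta> x * exp (assoc_fun M (\<tau> * norm y))))
      | Roumieu \<Rightarrow> (\<forall>\<tau>>0. \<exists>C>0. \<forall>x y. \<eta> (x + y) \<le> C * \<eta> x * exp (assoc_fun M (\<tau> * norm y))))"

text \<open>Inverse Fourier transform (convention F f(xi) = \<integral> e^{-2 pi i x.xi} f(x) dx).\<close>
definition inv_fourier :: "('a::euclidean_space \<Rightarrow> complex) \<Rightarrow> 'a \<Rightarrow> complex" where
  "inv_fourier g x = (\<integral>\<xi>. cis (2 * pi * (x \<bullet> \<xi>)) * g \<xi> \<partial>lborel)"

text \<open>Norm in FL^1_\<eta> of g = F f, i.e. \<parallel>\<eta> f\<parallel>_{L^1} with f = F^{-1} g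
  (used only for g integrable with integrable Fourier inverse, e.g. g in S^*_\<dagger>);
  value \<infinity> means g \<notin> FL^1_\<eta>.\<close>
definition FL1_norm :: "('a::euclidean_space \<Rightarrow> real) \<Rightarrow> ('a \<Rightarrow> complex) \<Rightarrow> ennreal" where
  "FL1_norm \<eta> g = (\<integral>\<^sup>+ x. ennreal (\<eta> x * norm (inv_fourier g x)) \<partial>lborel)"

text \<open>Uniform class-*-\<dagger> partition of unity (UCPU), index set = the countable type 'i.\<close>
definition UCPU :: "ultra_case \<Rightarrow> (nat \<Rightarrow> real) \<Rightarrow> (nat \<Rightarrow> real) \<Rightarrow>
    ('i::countable \<Rightarrow> 'a::euclidean_space \<Rightarrow> complex) \<Rightarrow> ('i \<Rightarrow> 'a) \<Rightarrow> bool" where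
  "UCPU c M A \<psi> y \<longleftrightarrow>
     (\<forall>l. in_S c M A (\<psi> l)) \<and>
     (let bnd = (\<lambda>h. \<exists>C. \<forall>l bs x. set bs \<subseteq> Basis \<longrightarrow>
           h ^ length bs * norm (iter_deriv bs (\<psi> l) x) * exp (assoc_fun A (h * norm (x - y l)))
             / M (length bs) \<le> C)
      in case c of Beurling \<Rightarrow> (\<forall>h>0. bnd h) | Roumieu \<Rightarrow> (\<exists>h>0. bnd h)) \<and>
     (\<forall>K. compact K \<longrightarrow> (\<exists>CK::nat. \<forall>x. finite {l. x \<in> (+) (y l) ` K} \<and> card {l. x \<in> (+) (y l) ` K} \<le> CK)) \<and>
     (\<exists>U. open U \<and> bounded U \<and> 0 \<in> U \<and> (\<Union>l. (+) (y l) ` U) = UNIV) \<and>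
     (\<forall>x. ((\<lambda>l. \<psi> l x) has_sum 1) UNIV)"

end

theory Submission
  imports Defs "HOL-Real_Asymp.Real_Asymp"
begin


lemma pow_fact_le_exp: "0 \<le> (x::real) \<Longrightarrow> x ^ n / fact n \<le> exp x"
proof -
  assume x: "0 \<le> x"
  obtain t where t: "exp x = (\<Sum>m<Suc n. x ^ m / fact m) + exp t / fact (Suc n) * x ^ Suc n"
    using Maclaurin_exp_le[of x "Suc n"] by blast
  have "x ^ n / fact n \<le> (\<Sum>m<Suc n. x ^ m / fact m)"
    using x by (intro member_le_sum) auto
  moreover have "0 \<le> exp t / fact (Suc n) * x ^ Suc n" using x by simp
  ultimately show ?thesis using t by linarith
qed

lemma ws_pos: "weight_sequence M \<Longrightarrow> M p > 0"
  unfolding weight_sequence_def by auto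

lemma ws_0: "weight_sequence M \<Longrightarrow> M 0 = 1"
  unfolding weight_sequence_def by auto

lemma ws_M2: "weight_sequence M \<Longrightarrow> \<exists>c0 H. c0 \<ge> 1 \<and> H \<ge> 1 \<and> (\<forall>p q. M (p + q) \<le> c0 * H ^ (p + q) * M p * M q)"
  unfolding weight_sequence_def by auto

lemma ws_ratio_step:
  assumes "weight_sequence M"
  shows "M (Suc p) / M p \<le> M (Suc (Suc p)) / M (Suc p)"
proof -
  have lc: "(M (Suc p))\<^sup>2 \<le> M p * M (Suc (Suc p))"
    using assms unfolding weight_sequence_def
    by (metis Suc_eq_plus1 diff_Suc_1 le_add2)
  have p1: "M p > 0" "M (Suc p) > 0" using ws_pos[OF assms] by auto
  show ?thesis using lc p1 by (simp add: divide_simps power2_eq_square mult.commute)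
qed

lemma ws_ratio_mono:
  assumes "weight_sequence M" "p \<le> q"
  shows "M (Suc p) / M p \<le> M (Suc q) / M q"
  using assms(2)
proof (induction q rule: dec_induct)
  case base then show ?case by simp
next
  case (step q) then show ?case using ws_ratio_step[OF assms(1), of q] by linarith
qed

lemma ws_mult:
  assumes "weight_sequence M"
  shows "M j * M i \<le> M (j + i)"
proof (induction i)
  case 0 then show ?case using ws_0[OF assms] by simp
next
  case (Suc i)
  have pos: "\<And>p. M p > 0" using ws_pos[OF assms] by auto
  have r: "M (Suc i) / M i \<le> M (Suc (j + i)) / M (j + i)"
    using ws_ratio_mono[OF assms, of i "j + i"] by simp
  have "M j * M (Suc i) = M j * M i * (M (Suc i) / M i)" using pos[of i] by simp
  also have "\<dots> \<le> M (j + i) * (M (Suc (j + i)) / M (j + i))"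
    using Suc r pos by (intro mult_mono) (auto intro: mult_nonneg_nonneg less_imp_le)
  also have "\<dots> = M (j + Suc i)" using pos[of "j+i"] by simp
  finally show ?case .
qed

lemma ws_bdd:
  assumes "weight_sequence M" "0 \<le> \<rho>"
  shows "bdd_above (range (\<lambda>p. ln (\<rho> ^ p / M p)))"
proof -
  obtain c0 L0 where c: "c0 \<ge> 1" "L0 \<ge> 1" "\<And>p. fact p \<le> c0 * L0 ^ p * M p"
    using assms(1) unfolding weight_sequence_def by auto
  have pos: "\<And>p. M p > 0" using ws_pos[OF assms(1)] by auto
  have "ln (\<rho> ^ p / M p) \<le> ln (c0 * exp (L0 * \<rho>))" for p
  proof (cases "\<rho> ^ p / M p > 0")
    case True
    have "\<rho> ^ p / M p \<le> c0 * ((L0 * \<rho>) ^ p / fact p)"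
    proof -
      have "\<rho> ^ p * fact p \<le> \<rho> ^ p * (c0 * L0 ^ p * M p)"
        using c(3)[of p] assms(2) by (intro mult_left_mono) auto
      then show ?thesis using pos[of p]
        by (simp add: divide_simps power_mult_distrib mult_ac)
    qed
    also have "\<dots> \<le> c0 * exp (L0 * \<rho>)"
      using pow_fact_le_exp[of "L0 * \<rho>" p] c assms(2) by (intro mult_left_mono) auto
    finally show ?thesis using True by (intro ln_mono) auto
  next
    case False
    then have "\<rho> ^ p / M p = 0" using divide_nonneg_pos[OF zero_le_power[OF assms(2), of p] pos[of p]] by linarith
    then have "ln (\<rho> ^ p / M p) = 0" by (simp only: ln_0)
    moreover have "1 \<le> exp (L0 * \<rho>)" using c assms(2) by simp
    ultimately show ?thesis using c mult_mono[of 1 c0 1 "exp (L0*\<rho>)"] by simp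
  qed
  then show ?thesis by (intro bdd_aboveI2) auto
qed

lemma assoc_ge:
  assumes "weight_sequence M" "0 \<le> \<rho>"
  shows "ln (\<rho> ^ p / M p) \<le> assoc_fun M \<rho>"
  unfolding assoc_fun_def by (rule cSUP_upper[OF UNIV_I ws_bdd[OF assms]])

lemma assoc_nonneg:
  assumes "weight_sequence M" "0 \<le> \<rho>"
  shows "0 \<le> assoc_fun M \<rho>"
  using assoc_ge[OF assms, of 0] ws_0[OF assms(1)] by simp

lemma assoc_mono:
  assumes "weight_sequence M" "0 \<le> \<rho>" "\<rho> \<le> \<sigma>"
  shows "assoc_fun M \<rho> \<le> assoc_fun M \<sigma>"
  unfolding assoc_fun_def
proof (rule cSUP_mono)
  show "bdd_above (range (\<lambda>p. ln (\<sigma> ^ p / M p)))" using ws_bdd[OF assms(1)] assms by auto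
  fix p
  have pos: "M p > 0" using ws_pos[OF assms(1)] by auto
  show "\<exists>q\<in>UNIV. ln (\<rho> ^ p / M p) \<le> ln (\<sigma> ^ q / M q)"
  proof (cases "\<rho> ^ p / M p > 0")
    case True
    have "ln (\<rho> ^ p / M p) \<le> ln (\<sigma> ^ p / M p)"
      using True assms pos by (intro ln_mono divide_right_mono power_mono) auto
    then show ?thesis by blast
  next
    case False
    then have "\<rho> ^ p / M p = 0" using divide_nonneg_pos[OF zero_le_power[OF assms(2), of p] pos] by linarith
    then have "ln (\<rho> ^ p / M p) = 0" by (simp only: ln_0)
    moreover have "ln (\<sigma> ^ 0 / M 0) = 0" using ws_0[OF assms(1)] by simp
    ultimately show ?thesis by (intro bexI[of _ 0]) auto
  qed
qed auto

lemma exp_neg_assoc_le: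
  assumes "weight_sequence M" "0 < \<rho>"
  shows "exp (- assoc_fun M \<rho>) \<le> M p / \<rho> ^ p"
proof -
  have pos: "M p > 0" using ws_pos[OF assms(1)] by auto
  have "ln (\<rho> ^ p / M p) \<le> assoc_fun M \<rho>" using assoc_ge[OF assms(1)] assms by auto
  then have "exp (ln (\<rho> ^ p / M p)) \<le> exp (assoc_fun M \<rho>)" by simp
  then have "\<rho> ^ p / M p \<le> exp (assoc_fun M \<rho>)" using pos assms by simp
  then show ?thesis using pos assms by (simp add: exp_minus divide_simps mult.commute)
qed

lemma exp_neg_assoc_le1:
  assumes "weight_sequence M" "0 \<le> \<rho>"
  shows "exp (- assoc_fun M \<rho>) \<le> 1"
  using assoc_nonneg[OF assms] by simp

lemma assoc_le_from_terms:
  assumes "weight_sequence M" "0 \<le> \<rho>" "0 \<le> N" "\<And>p. \<rho> ^ p / M p * N \<le> B"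
  shows "exp (assoc_fun M \<rho>) * N \<le> B"
proof (cases "N = 0")
  case True
  then show ?thesis using assms(4)[of 0] by simp
next
  case False
  then have N: "N > 0" using assms by auto
  have B1: "1 \<le> B / N" using assms(4)[of 0] ws_0[OF assms(1)] N by (simp add: divide_simps)
  have pos: "\<And>p. M p > 0" using ws_pos[OF assms(1)] by auto
  have "assoc_fun M \<rho> \<le> ln (B / N)"
    unfolding assoc_fun_def
  proof (rule cSUP_least)
    fix p
    show "ln (\<rho> ^ p / M p) \<le> ln (B / N)"
    proof (cases "\<rho> ^ p / M p > 0")
      case True
      have "\<rho> ^ p / M p \<le> B / N" using assms(4)[of p] N by (simp add: divide_simps)
      then show ?thesis using True by (intro ln_mono) auto
    next
      case False
      then have "\<rho> ^ p / M p = 0" using divide_nonneg_pos[OF zero_le_power[OF assms(2), of p] pos[of p]] by linarith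
      then have "ln (\<rho> ^ p / M p) = 0" by (simp only: ln_0)
      then show ?thesis using B1 by simp
    qed
  qed auto
  then have "exp (assoc_fun M \<rho>) \<le> B / N" using B1
    by (metis exp_le_cancel_iff exp_ln less_le_trans zero_less_one)
  then show ?thesis using N by (simp add: divide_simps)
qed

lemma frac_aux: "(a::real) > 0 \<Longrightarrow> b > 0 \<Longrightarrow> m > 0 \<Longrightarrow> X > 0 \<Longrightarrow> X * m \<le> X * (c0 * Hp * a * b)
   \<Longrightarrow> X / (a * b) \<le> c0 * (Hp * X / m)"
  by (simp add: divide_simps)

lemma assoc_M2:
  assumes "weight_sequence M" "0 \<le> \<rho>" "c0 \<ge> 1" "H \<ge> 1"
    "\<And>p q. M (p + q) \<le> c0 * H ^ (p + q) * M p * M q"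
  shows "2 * assoc_fun M \<rho> \<le> assoc_fun M (H * \<rho>) + ln c0"
proof (cases "\<rho> = 0")
  case True
  have t: "(0::real) ^ p / M p * 1 \<le> 1" for p
    using ws_0[OF assms(1)] by (cases p) auto
  have "exp (assoc_fun M 0) * 1 \<le> 1"
    by (rule assoc_le_from_terms[OF assms(1)]) (use t in auto)
  then have "assoc_fun M 0 \<le> 0" by simp
  then show ?thesis using True assoc_nonneg[OF assms(1), of 0] assms(3) by simp
next
  case False
  then have r: "\<rho> > 0" using assms by auto
  have pos: "\<And>p. M p > 0" using ws_pos[OF assms(1)] by auto
  have key: "ln (\<rho> ^ p / M p) + ln (\<rho> ^ q / M q) \<le> assoc_fun M (H * \<rho>) + ln c0" for p q
  proof -
    have "ln (\<rho> ^ p / M p) + ln (\<rho> ^ q / M q) = ln ((\<rho> ^ p / M p) * (\<rho> ^ q / M q))"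
      by (subst ln_mult) (use r pos[of p] pos[of q] in auto)
    also have "\<dots> = ln (\<rho> ^ (p + q) / (M p * M q))" by (simp add: power_add)
    also have "\<dots> \<le> ln (c0 * ((H * \<rho>) ^ (p + q) / M (p + q)))"
    proof (rule ln_mono)
      show "0 < \<rho> ^ (p + q) / (M p * M q)" using r pos by simp
      have "\<rho> ^ (p + q) * M (p + q) \<le> \<rho> ^ (p + q) * (c0 * H ^ (p + q) * M p * M q)"
        using assms(5)[of p q] r by (intro mult_left_mono) auto
      then show "\<rho> ^ (p + q) / (M p * M q) \<le> c0 * ((H * \<rho>) ^ (p + q) / M (p + q))"
        unfolding power_mult_distrib using pos[of p] pos[of q] pos[of "p+q"] r
        by (intro frac_aux) auto
    qed
    also have "\<dots> = ln c0 + ln ((H * \<rho>) ^ (p + q) / M (p + q))"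
      using assms r pos[of "p+q"] by (subst ln_mult) auto
    also have "\<dots> \<le> ln c0 + assoc_fun M (H * \<rho>)"
      using assoc_ge[OF assms(1), of "H * \<rho>" "p + q"] assms r by auto
    finally show ?thesis by simp
  qed
  define B where "B = assoc_fun M (H * \<rho>) + ln c0"
  have "ln (\<rho> ^ q / M q) \<le> B - assoc_fun M \<rho>" for q
  proof -
    have "assoc_fun M \<rho> \<le> B - ln (\<rho> ^ q / M q)"
      unfolding assoc_fun_def[of M \<rho>]
    proof (rule cSUP_least)
      fix p show "ln (\<rho> ^ p / M p) \<le> B - ln (\<rho> ^ q / M q)" using key[of p q] unfolding B_def by linarith
    qed auto
    then show ?thesis by simp
  qed
  then have "(SUP p. ln (\<rho> ^ p / M p)) \<le> B - assoc_fun M \<rho>"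
    by (intro cSUP_least) auto
  then have "assoc_fun M \<rho> \<le> B - assoc_fun M \<rho>"
    by (simp only: assoc_fun_def)
  then show ?thesis unfolding B_def by simp
qed



lemma line_vd:
  fixes F :: "'a::euclidean_space \<Rightarrow> complex"
  assumes "F differentiable at (x + t *\<^sub>R b)"
  shows "((\<lambda>s. F (x + s *\<^sub>R b)) has_vector_derivative dir_deriv b F (x + t *\<^sub>R b)) (at t)"
proof -
  obtain D where D: "(F has_derivative D) (at (x + t *\<^sub>R b))"
    using assms unfolding differentiable_def by blast
  have lin: "linear D" using D has_derivative_linear by blast
  have l: "((\<lambda>s. x + s *\<^sub>R b) has_derivative (\<lambda>s. s *\<^sub>R b)) (at u)" for u
    by (auto intro!: derivative_eq_intros)
  have c: "((\<lambda>s. F (x + s *\<^sub>R b)) has_derivative (\<lambda>s. D (s *\<^sub>R b))) (at t)"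
    using has_derivative_compose[OF l D] by simp
  have eq: "(\<lambda>s. D (s *\<^sub>R b)) = (\<lambda>s. s *\<^sub>R D b)"
    using lin by (simp add: linear_scale)
  have vd: "((\<lambda>s. F (x + s *\<^sub>R b)) has_vector_derivative D b) (at t)"
    using c unfolding has_vector_derivative_def eq .
  have D0: "(F has_derivative D) (at ((x + t *\<^sub>R b) + 0 *\<^sub>R b))" using D by simp
  have l0: "((\<lambda>s. (x + t *\<^sub>R b) + s *\<^sub>R b) has_derivative (\<lambda>s. s *\<^sub>R b)) (at 0)"
    by (auto intro!: derivative_eq_intros)
  have c0: "((\<lambda>s. F ((x + t *\<^sub>R b) + s *\<^sub>R b)) has_vector_derivative D b) (at 0)"
    using has_derivative_compose[OF l0 D0] unfolding has_vector_derivative_def eq by simp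
  have "dir_deriv b F (x + t *\<^sub>R b) = D b"
    unfolding dir_deriv_def by (rule vector_derivative_at[OF c0])
  then show ?thesis using vd by simp
qed

lemma line_vd0:
  fixes F :: "'a::euclidean_space \<Rightarrow> complex"
  assumes "F differentiable at x"
  shows "((\<lambda>s. F (x + s *\<^sub>R b)) has_vector_derivative dir_deriv b F x) (at 0)"
  using line_vd[of F x 0 b] assms by simp

lemma dir_deriv_from_vd:
  assumes "((\<lambda>s. F (x + s *\<^sub>R b)) has_vector_derivative v) (at 0)"
  shows "dir_deriv b F x = v"
  unfolding dir_deriv_def by (rule vector_derivative_at[OF assms])

abbreviation Dk :: "'a::euclidean_space \<Rightarrow> nat \<Rightarrow> ('a \<Rightarrow> complex) \<Rightarrow> 'a \<Rightarrow> complex" where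
  "Dk b k f \<equiv> iter_deriv (replicate k b) f"

lemma Dk_Suc: "Dk b (Suc k) f = dir_deriv b (Dk b k f)"
  by simp

lemma smooth_Dk_diff:
  assumes "smooth_fun f" "b \<in> Basis"
  shows "Dk b k f differentiable at x"
proof -
  have "set (replicate k b) \<subseteq> Basis" using assms(2) by (induct k) auto
  then show ?thesis using assms(1) unfolding smooth_fun_def by blast
qed

lemma leibniz:
  fixes F G :: "'a::euclidean_space \<Rightarrow> complex"
  assumes dF: "\<And>k x. Dk b k F differentiable at x" and dG: "\<And>k x. Dk b k G differentiable at x"
  shows "Dk b k (\<lambda>x. F x * G x) = (\<lambda>x. \<Sum>i\<le>k. of_nat (k choose i) * Dk b i F x * Dk b (k - i) G x)"
proof (induction k)
  case 0 then show ?case by simp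
next
  case (Suc k)
  show ?case
  proof
    fix x
    have vd: "((\<lambda>s. \<Sum>i\<le>k. of_nat (k choose i) * Dk b i F (x + s *\<^sub>R b) * Dk b (k - i) G (x + s *\<^sub>R b))
       has_vector_derivative
       (\<Sum>i\<le>k. of_nat (k choose i) * (Dk b i F x * dir_deriv b (Dk b (k - i) G) x + dir_deriv b (Dk b i F) x * Dk b (k - i) G x))) (at 0)"
      unfolding mult.assoc
      apply (intro has_vector_derivative_sum has_vector_derivative_mult_right)
      using has_vector_derivative_mult[OF line_vd0[OF dF] line_vd0[OF dG]]
      by simp
    have "Dk b (Suc k) (\<lambda>x. F x * G x) x =
       (\<Sum>i\<le>k. of_nat (k choose i) * (Dk b i F x * Dk b (Suc (k - i)) G x + Dk b (Suc i) F x * Dk b (k - i) G x))"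
      using dir_deriv_from_vd[OF vd] by (simp add: Suc.IH)
    also have "\<dots> = (\<Sum>i\<le>Suc k. of_nat (Suc k choose i) * Dk b i F x * Dk b (Suc k - i) G x)"
    proof -
      let ?a = "\<lambda>i. Dk b i F x" and ?g = "\<lambda>j. Dk b j G x"
      have "(\<Sum>i\<le>k. of_nat (k choose i) * (?a i * ?g (Suc (k - i)) + ?a (Suc i) * ?g (k - i)))
          = (\<Sum>i\<le>k. of_nat (k choose i) * ?a i * ?g (Suc k - i)) + (\<Sum>i\<le>k. of_nat (k choose i) * ?a (Suc i) * ?g (k - i))"
        by (simp add: sum.distrib algebra_simps Suc_diff_le)
      also have "(\<Sum>i\<le>k. of_nat (k choose i) * ?a (Suc i) * ?g (k - i))
          = (\<Sum>i\<le>Suc k. of_nat (k choose (i - 1)) * ?a i * ?g (Suc k - i)) - of_nat (k choose (0 - 1)) * ?a 0 * ?g (Suc k)"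
        by (subst sum.atMost_Suc_shift) simp
      also have "(\<Sum>i\<le>k. of_nat (k choose i) * ?a i * ?g (Suc k - i)) = (\<Sum>i\<le>Suc k. of_nat (k choose i) * ?a i * ?g (Suc k - i))"
        by simp
      finally have "(\<Sum>i\<le>k. of_nat (k choose i) * (?a i * ?g (Suc (k - i)) + ?a (Suc i) * ?g (k - i)))
         = (\<Sum>i\<le>Suc k. (of_nat (k choose i) + of_nat (k choose (i - 1))) * ?a i * ?g (Suc k - i)) - of_nat (k choose 0) * ?a 0 * ?g (Suc k)"
        by (simp add: sum.distrib algebra_simps)
      also have "\<dots> = (\<Sum>i\<le>Suc k. of_nat (Suc k choose i) * ?a i * ?g (Suc k - i))"
      proof -
        have "(\<Sum>i\<le>Suc k. (of_nat (k choose i) + of_nat (k choose (i - 1))) * ?a i * ?g (Suc k - i))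
            = (of_nat (k choose 0) + of_nat (k choose (0 - 1))) * ?a 0 * ?g (Suc k) + (\<Sum>i\<le>k. (of_nat (k choose Suc i) + of_nat (k choose i)) * ?a (Suc i) * ?g (k - i))"
          by (subst sum.atMost_Suc_shift) simp
        moreover have "(\<Sum>i\<le>Suc k. of_nat (Suc k choose i) * ?a i * ?g (Suc k - i))
            = of_nat (Suc k choose 0) * ?a 0 * ?g (Suc k) + (\<Sum>i\<le>k. of_nat (Suc k choose Suc i) * ?a (Suc i) * ?g (k - i))"
          by (subst sum.atMost_Suc_shift) simp
        ultimately show ?thesis by (simp add: add.commute)
      qed
      finally show ?thesis by simp
    qed
    finally show "Dk b (Suc k) (\<lambda>x. F x * G x) x = (\<Sum>i\<le>Suc k. of_nat (Suc k choose i) * Dk b i F x * Dk b (Suc k - i) G x)" .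
  qed
qed



lemma vd_quotient:
  fixes g :: "real \<Rightarrow> 'b::real_normed_vector"
  assumes "(g has_vector_derivative v) (at 0)"
  shows "((\<lambda>y. (g y - g 0) /\<^sub>R y) \<longlongrightarrow> v) (at 0)"
proof -
  have "(g has_derivative (\<lambda>h. h *\<^sub>R v)) (at 0)" using assms unfolding has_vector_derivative_def .
  then have L: "((\<lambda>y. (1 / norm (y - 0)) *\<^sub>R (g y - (g 0 + (y - 0) *\<^sub>R v))) \<longlongrightarrow> 0) (at 0)"
    unfolding has_derivative_at2 by blast
  have L2: "((\<lambda>y. norm ((1 / norm (y - 0)) *\<^sub>R (g y - (g 0 + (y - 0) *\<^sub>R v)))) \<longlongrightarrow> 0) (at (0::real))"
    using tendsto_norm_zero[OF L] .
  have eq: "norm ((g y - g 0) /\<^sub>R y - v) = norm ((1 / norm (y - 0)) *\<^sub>R (g y - (g 0 + (y - 0) *\<^sub>R v)))"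
    if "y \<noteq> 0" for y
  proof -
    have "(g y - g 0) /\<^sub>R y - v = (1 / y) *\<^sub>R (g y - (g 0 + y *\<^sub>R v))"
      unfolding scaleR_diff_right scaleR_add_right using that by (simp add: inverse_eq_divide)
    then show ?thesis by simp
  qed
  have ev: "\<forall>\<^sub>F y in at 0. norm ((1 / norm (y - 0)) *\<^sub>R (g y - (g 0 + (y - 0) *\<^sub>R v))) = norm ((g y - g 0) /\<^sub>R y - v)"
    unfolding eventually_at_filter by (rule always_eventually) (use eq in auto)
  have "((\<lambda>y. norm ((g y - g 0) /\<^sub>R y - v)) \<longlongrightarrow> 0) (at 0)"
    by (rule Lim_transform_eventually[OF L2 ev])
  then have "((\<lambda>y. (g y - g 0) /\<^sub>R y - v) \<longlongrightarrow> 0) (at 0)"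
    by (rule tendsto_norm_zero_cancel)
  then show ?thesis by (rule LIM_zero_cancel)
qed

lemma tj_at0: "filterlim (\<lambda>j. 1 / real (Suc j)) (at (0::real)) sequentially"
proof -
  have "(\<lambda>j. 1 / real (Suc j)) \<longlonglongrightarrow> 0"
    using LIMSEQ_inverse_real_of_nat by (simp add: inverse_eq_divide)
  then show ?thesis
    by (intro filterlim_atI) auto
qed

lemma mvt_line:
  fixes F :: "'a::euclidean_space \<Rightarrow> complex"
  assumes dF: "\<And>z. F differentiable at z"
    and bnd: "\<And>s. 0 \<le> s \<Longrightarrow> s \<le> t \<Longrightarrow> norm (dir_deriv b F (\<xi> + s *\<^sub>R b)) \<le> B"
    and t: "0 < t"
  shows "norm (F (\<xi> + t *\<^sub>R b) - F \<xi>) \<le> t * B"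
proof -
  let ?g = "\<lambda>s. F (\<xi> + s *\<^sub>R b)"
  have vd: "(?g has_vector_derivative dir_deriv b F (\<xi> + s *\<^sub>R b)) (at s)" for s
    using line_vd[OF dF] .
  have cont: "continuous_on {0..t} ?g"
    using vd by (intro continuous_at_imp_continuous_on) (auto intro: has_vector_derivative_continuous)
  have "norm (?g t - ?g 0) \<le> t * B - 0 * B"
    by (rule differentiable_bound_general[OF t cont _ vd, of "\<lambda>s. s * B" "\<lambda>_. B"])
       (auto intro!: derivative_eq_intros continuous_intros bnd simp: has_real_derivative_iff_has_vector_derivative[symmetric])
  then show ?thesis by simp
qed



lemma cont_meas:
  fixes f :: "'a::euclidean_space \<Rightarrow> 'b::{second_countable_topology, real_normed_vector}"
  shows "continuous_on UNIV f \<Longrightarrow> f \<in> borel_measurable lborel"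
  by (simp add: borel_measurable_continuous_onI)

lemma diff_cont:
  fixes F :: "'a::euclidean_space \<Rightarrow> complex"
  shows "(\<And>z. F differentiable at z) \<Longrightarrow> continuous_on UNIV F"
  by (intro continuous_at_imp_continuous_on) (auto intro: differentiable_imp_continuous_within)

lemma cis_vd: "((\<lambda>t::real. cis (c * t)) has_vector_derivative (\<i> * of_real c)) (at 0)"
proof -
  have "((\<lambda>z. exp (z * (\<i> * of_real c))) has_field_derivative (\<i> * of_real c)) (at (of_real 0))"
    by (auto intro!: derivative_eq_intros)
  from has_vector_derivative_real_field[OF this]
  have "((\<lambda>t::real. exp (of_real t * (\<i> * of_real c))) has_vector_derivative (\<i> * of_real c)) (at 0)" .
  moreover have "(\<lambda>t::real. exp (of_real t * (\<i> * of_real c))) = (\<lambda>t. cis (c * t))"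
    by (auto simp: cis_conv_exp mult_ac)
  ultimately show ?thesis by simp
qed

lemma ft_deriv:
  fixes F :: "'a::euclidean_space \<Rightarrow> complex" and w w' :: "'a \<Rightarrow> real"
  assumes dF: "\<And>z. F differentiable at z"
    and cD: "continuous_on UNIV (dir_deriv b F)"
    and w: "integrable lborel w" and w': "integrable lborel w'"
    and bF: "\<And>\<xi> s. \<bar>s\<bar> \<le> 1 \<Longrightarrow> norm (F (\<xi> + s *\<^sub>R b)) \<le> w \<xi>"
    and bD: "\<And>\<xi> s. \<bar>s\<bar> \<le> 1 \<Longrightarrow> norm (dir_deriv b F (\<xi> + s *\<^sub>R b)) \<le> w' \<xi>"
  shows "inv_fourier (dir_deriv b F) x = (\<i> * of_real (- 2 * pi * (x \<bullet> b))) * inv_fourier F x"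
proof -
  define e where "e = (\<lambda>\<xi>::'a. cis (2 * pi * (x \<bullet> \<xi>)))"
  define t where "t = (\<lambda>j::nat. 1 / real (Suc j))"
  define I where "I = inv_fourier F x"
  define s where "s = (\<lambda>j \<xi>. e \<xi> * ((F (\<xi> + t j *\<^sub>R b) - F \<xi>) /\<^sub>R t j))"
  have t_pos: "0 < t j" "t j \<le> 1" for j unfolding t_def by (auto simp: divide_simps)
  have ce: "continuous_on UNIV e" unfolding e_def by (intro continuous_intros)
  have cF: "continuous_on UNIV F" using diff_cont[OF dF] .
  have cFt: "continuous_on UNIV (\<lambda>\<xi>. F (\<xi> + c))" for c
    by (rule continuous_on_compose2[OF cF]) (auto intro: continuous_intros)
  have ne: "norm (e \<xi>) = 1" for \<xi> unfolding e_def by simp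
  have ms: "s j \<in> borel_measurable lborel" for j
    unfolding s_def by (intro cont_meas continuous_intros ce cF cFt)
  have mlim: "(\<lambda>\<xi>. e \<xi> * dir_deriv b F \<xi>) \<in> borel_measurable lborel"
    by (intro cont_meas continuous_intros ce cD)
  have lim: "(\<lambda>j. s j \<xi>) \<longlonglongrightarrow> e \<xi> * dir_deriv b F \<xi>" for \<xi>
  proof -
    have q: "((\<lambda>y. (F (\<xi> + y *\<^sub>R b) - F (\<xi> + 0 *\<^sub>R b)) /\<^sub>R y) \<longlongrightarrow> dir_deriv b F \<xi>) (at 0)"
      by (rule vd_quotient[OF line_vd0[OF dF]])
    have "(\<lambda>j. (F (\<xi> + t j *\<^sub>R b) - F \<xi>) /\<^sub>R t j) \<longlonglongrightarrow> dir_deriv b F \<xi>"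
      using filterlim_compose[OF q tj_at0] unfolding t_def by simp
    then show ?thesis unfolding s_def by (intro tendsto_mult_left)
  qed
  have bnd: "norm (s j \<xi>) \<le> w' \<xi>" for j \<xi>
  proof -
    have "norm (F (\<xi> + t j *\<^sub>R b) - F \<xi>) \<le> t j * w' \<xi>"
    proof (rule mvt_line[OF dF _ t_pos(1)])
      fix u assume "0 \<le> u" "u \<le> t j"
      then have "\<bar>u\<bar> \<le> 1" using t_pos(2)[of j] by auto
      then show "norm (dir_deriv b F (\<xi> + u *\<^sub>R b)) \<le> w' \<xi>" by (rule bD)
    qed
    then show ?thesis unfolding s_def using t_pos(1)[of j]
      by (simp add: norm_mult ne divide_simps mult.commute)
  qed
  have DCT: "(\<lambda>j. integral\<^sup>L lborel (s j)) \<longlonglongrightarrow> integral\<^sup>L lborel (\<lambda>\<xi>. e \<xi> * dir_deriv b F \<xi>)"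
    by (rule integral_dominated_convergence[OF mlim ms w']) (auto intro: lim bnd)
  have intF: "integrable lborel (\<lambda>\<xi>. e \<xi> * F (\<xi> + c *\<^sub>R b))" if "\<bar>c\<bar> \<le> 1" for c
  proof (rule Bochner_Integration.integrable_bound[OF w])
    show "(\<lambda>\<xi>. e \<xi> * F (\<xi> + c *\<^sub>R b)) \<in> borel_measurable lborel"
      by (intro cont_meas continuous_intros ce cFt)
    show "AE \<xi> in lborel. norm (e \<xi> * F (\<xi> + c *\<^sub>R b)) \<le> norm (w \<xi>)"
      using bF[OF that] by (auto simp: norm_mult ne intro: order_trans[OF _ abs_ge_self])
  qed
  have shift: "integral\<^sup>L lborel (\<lambda>\<xi>. e \<xi> * F (\<xi> + c *\<^sub>R b)) = cis (- 2 * pi * (x \<bullet> b) * c) * I" for c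
  proof -
    have "I = integral\<^sup>L (distr lborel borel ((+) (c *\<^sub>R b))) (\<lambda>\<zeta>. e \<zeta> * F \<zeta>)"
      unfolding I_def inv_fourier_def lborel_distr_plus e_def ..
    also have "\<dots> = integral\<^sup>L lborel (\<lambda>\<xi>. e (c *\<^sub>R b + \<xi>) * F (c *\<^sub>R b + \<xi>))"
    proof (rule integral_distr)
      show "(\<lambda>\<zeta>. e \<zeta> * F \<zeta>) \<in> borel_measurable borel"
        by (intro borel_measurable_continuous_onI continuous_intros ce cF)
    qed simp
    also have "\<dots> = integral\<^sup>L lborel (\<lambda>\<xi>. cis (2 * pi * (x \<bullet> b) * c) * (e \<xi> * F (\<xi> + c *\<^sub>R b)))"
      unfolding e_def by (intro Bochner_Integration.integral_cong refl)
        (simp add: inner_add_right cis_mult[symmetric] algebra_simps)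
    also have "\<dots> = cis (2 * pi * (x \<bullet> b) * c) * integral\<^sup>L lborel (\<lambda>\<xi>. e \<xi> * F (\<xi> + c *\<^sub>R b))"
      by (rule integral_mult_right_zero)
    finally have "cis (- 2 * pi * (x \<bullet> b) * c) * I = cis (- 2 * pi * (x \<bullet> b) * c) * cis (2 * pi * (x \<bullet> b) * c) * integral\<^sup>L lborel (\<lambda>\<xi>. e \<xi> * F (\<xi> + c *\<^sub>R b))"
      by simp
    also have "\<dots> = integral\<^sup>L lborel (\<lambda>\<xi>. e \<xi> * F (\<xi> + c *\<^sub>R b))"
    proof -
      have "cis (- 2 * pi * (x \<bullet> b) * c) * cis (2 * pi * (x \<bullet> b) * c) = 1"
        by (simp add: cis_mult)
      then show ?thesis by simp
    qed
    finally show ?thesis by simp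
  qed
  have intj: "integral\<^sup>L lborel (s j) = ((cis (- 2 * pi * (x \<bullet> b) * t j) - cis (- 2 * pi * (x \<bullet> b) * 0)) /\<^sub>R t j) * I" for j
  proof -
    have "integral\<^sup>L lborel (s j) = integral\<^sup>L lborel (\<lambda>\<xi>. (1 / t j) *\<^sub>R (e \<xi> * F (\<xi> + t j *\<^sub>R b) - e \<xi> * F (\<xi> + 0 *\<^sub>R b)))"
      unfolding s_def by (intro Bochner_Integration.integral_cong refl) (simp add: algebra_simps inverse_eq_divide)
    also have "\<dots> = (1 / t j) *\<^sub>R (integral\<^sup>L lborel (\<lambda>\<xi>. e \<xi> * F (\<xi> + t j *\<^sub>R b)) - integral\<^sup>L lborel (\<lambda>\<xi>. e \<xi> * F (\<xi> + 0 *\<^sub>R b)))"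
      using intF[of "t j"] intF[of 0] t_pos[of j] by simp
    also have "\<dots> = ((cis (- 2 * pi * (x \<bullet> b) * t j) - cis (- 2 * pi * (x \<bullet> b) * 0)) /\<^sub>R t j) * I"
      unfolding shift by (simp add: algebra_simps inverse_eq_divide)
    finally show ?thesis .
  qed
  have q2: "((\<lambda>y. (cis (- 2 * pi * (x \<bullet> b) * y) - cis (- 2 * pi * (x \<bullet> b) * 0)) /\<^sub>R y) \<longlongrightarrow> \<i> * of_real (- 2 * pi * (x \<bullet> b))) (at 0)"
    by (rule vd_quotient[OF cis_vd])
  have "(\<lambda>j. integral\<^sup>L lborel (s j)) \<longlonglongrightarrow> (\<i> * of_real (- 2 * pi * (x \<bullet> b))) * I"
    unfolding intj using filterlim_compose[OF q2 tj_at0] unfolding t_def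
    by (intro tendsto_mult_right) simp
  from LIMSEQ_unique[OF DCT this] show ?thesis
    unfolding I_def inv_fourier_def e_def by simp
qed



definition Qf :: "'a::euclidean_space \<Rightarrow> real" where
  "Qf x = (\<Prod>b\<in>Basis. 1 / (1 + \<bar>x \<bullet> b\<bar>)\<^sup>2)"

lemma half_line_int: "(\<integral>\<^sup>+t. ennreal (1 / (1 + t)\<^sup>2) * indicator {0..} t \<partial>lborel) = 1"
proof -
  have "(\<integral>\<^sup>+t. ennreal (1 / (1 + t)\<^sup>2) * indicator {0..} t \<partial>lborel) = ennreal (0 - (- 1 / (1 + 0)))"
  proof (rule nn_integral_FTC_atLeast[where F = "\<lambda>t. - 1 / (1 + t)"])
    show "(\<lambda>t::real. 1 / (1 + t)\<^sup>2) \<in> borel_measurable borel" by measurable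
    fix t :: real assume t: "0 \<le> t"
    show "((\<lambda>t. - 1 / (1 + t)) has_real_derivative 1 / (1 + t)\<^sup>2) (at t)"
      using t by (auto intro!: derivative_eq_intros simp: power2_eq_square)
    show "0 \<le> 1 / (1 + t)\<^sup>2" by simp
  next
    have "((\<lambda>t::real. 1 / (1 + t)) \<longlongrightarrow> 0) at_top"
      by real_asymp
    then show "((\<lambda>t::real. - 1 / (1 + t)) \<longlongrightarrow> 0) at_top"
      using tendsto_minus[of _ 0] by (simp add: minus_divide_left[symmetric])
  qed
  then show ?thesis by simp
qed

lemma line_int_fin: "(\<integral>\<^sup>+t. ennreal (1 / (1 + \<bar>t\<bar>)\<^sup>2) \<partial>lborel) < \<infinity>"
proof -
  let ?f = "\<lambda>t::real. ennreal (1 / (1 + t)\<^sup>2) * indicator {0..} t"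
  have le: "ennreal (1 / (1 + \<bar>t\<bar>)\<^sup>2) \<le> ?f t + ?f (0 + (-1) * t)" for t :: real
    by (cases "0 \<le> t") (auto simp: indicator_def)
  have m: "?f \<in> borel_measurable borel" by measurable
  have "(\<integral>\<^sup>+t. ennreal (1 / (1 + \<bar>t\<bar>)\<^sup>2) \<partial>lborel) \<le> (\<integral>\<^sup>+t. ?f t + ?f (0 + (-1) * t) \<partial>lborel)"
    by (intro nn_integral_mono le)
  also have "\<dots> = (\<integral>\<^sup>+t. ?f t \<partial>lborel) + (\<integral>\<^sup>+t. ?f (0 + (-1) * t) \<partial>lborel)"
    by (rule nn_integral_add) (use m in auto)
  also have "(\<integral>\<^sup>+t. ?f (0 + (-1) * t) \<partial>lborel) = (\<integral>\<^sup>+t. ?f t \<partial>lborel)"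
    using nn_integral_real_affine[OF m, of "-1" 0] by simp
  finally have "(\<integral>\<^sup>+t. ennreal (1 / (1 + \<bar>t\<bar>)\<^sup>2) \<partial>lborel) \<le> 1 + 1" using half_line_int by simp
  moreover have "(1::ennreal) + 1 < \<infinity>" by simp
  ultimately show ?thesis by (rule le_less_trans)
qed

lemma Qf_pos: "0 < Qf x"
  unfolding Qf_def by (intro prod_pos) auto

lemma Qf_cont: "continuous_on UNIV Qf"
  unfolding Qf_def by (intro continuous_intros) (auto simp: add_pos_nonneg)

lemma Qf_integrable: "integrable lborel (Qf :: 'a::euclidean_space \<Rightarrow> real)"
proof -
  have m: "(Qf :: 'a \<Rightarrow> real) \<in> borel_measurable lborel" by (rule cont_meas[OF Qf_cont])
  have "(\<integral>\<^sup>+x. ennreal (norm (Qf x)) \<partial>(lborel :: 'a measure)) = (\<integral>\<^sup>+x. (\<Prod>b\<in>Basis. ennreal (1 / (1 + \<bar>x \<bullet> b\<bar>)\<^sup>2)) \<partial>(lborel :: 'a measure))"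
  proof (rule nn_integral_cong)
    fix x :: 'a
    have "norm (Qf x) = Qf x" using Qf_pos[of x] by simp
    then show "ennreal (norm (Qf x)) = (\<Prod>b\<in>Basis. ennreal (1 / (1 + \<bar>x \<bullet> b\<bar>)\<^sup>2))"
      by (simp add: Qf_def prod_ennreal)
  qed
  also have "\<dots> = (\<Prod>b\<in>(Basis :: 'a set). (\<integral>\<^sup>+t. ennreal (1 / (1 + \<bar>t\<bar>)\<^sup>2) \<partial>lborel))"
    by (rule nn_integral_lborel_prod[where f = "\<lambda>b t. ennreal (1 / (1 + \<bar>t\<bar>)\<^sup>2)"]) auto
  also have "\<dots> < \<infinity>"
    using line_int_fin by (simp add: power_less_top_ennreal)
  finally show ?thesis using m by (simp add: integrable_iff_bounded)
qed

lemma Qf_shift_integrable: "integrable lborel (\<lambda>x. Qf (x - c :: 'a::euclidean_space))"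
proof -
  have "integrable (distr lborel borel ((+) (- c))) (Qf :: 'a \<Rightarrow> real)"
    unfolding lborel_distr_plus by (rule Qf_integrable)
  then have "integrable lborel (\<lambda>x. Qf (- c + x))"
    by (subst integrable_distr_eq[symmetric]) (auto intro: borel_measurable_continuous_onI[OF Qf_cont])
  then show ?thesis by (simp add: add.commute)
qed

lemma Qf_shift_integral: "integral\<^sup>L lborel (\<lambda>x. Qf (x - c :: 'a::euclidean_space)) = integral\<^sup>L lborel (Qf :: 'a \<Rightarrow> real)"
proof -
  have "integral\<^sup>L lborel (Qf :: 'a \<Rightarrow> real) = integral\<^sup>L (distr lborel borel ((+) (- c))) Qf"
    unfolding lborel_distr_plus ..
  also have "\<dots> = integral\<^sup>L lborel (\<lambda>x. Qf (- c + x))"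
    by (rule integral_distr) (auto intro: borel_measurable_continuous_onI[OF Qf_cont])
  also have "(\<lambda>x. Qf (- c + x)) = (\<lambda>x. Qf (x - c))" by (simp add: algebra_simps)
  finally show ?thesis by (rule sym)
qed

lemma Qf_ge: "1 / (1 + norm x) ^ (2 * DIM('a)) \<le> Qf (x :: 'a::euclidean_space)"
proof -
  have "1 / (1 + norm x) ^ (2 * DIM('a)) = (\<Prod>b\<in>(Basis::'a set). 1 / (1 + norm x)\<^sup>2)"
    by (simp add: power_mult power_one_over)
  also have "\<dots> \<le> Qf x"
    unfolding Qf_def
  proof (rule prod_mono)
    fix b :: 'a assume b: "b \<in> Basis"
    have "\<bar>x \<bullet> b\<bar> \<le> norm x" using Basis_le_norm[OF b] .
    then have "(1 + \<bar>x \<bullet> b\<bar>)\<^sup>2 \<le> (1 + norm x)\<^sup>2" by (intro power_mono) auto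
    then show "0 \<le> 1 / (1 + norm x)\<^sup>2 \<and> 1 / (1 + norm x)\<^sup>2 \<le> 1 / (1 + \<bar>x \<bullet> b\<bar>)\<^sup>2"
      by (auto intro!: divide_left_mono simp: add_pos_nonneg)
  qed
  finally show ?thesis .
qed



lemma ft_iter:
  fixes F :: "'a::euclidean_space \<Rightarrow> complex"
  assumes dF: "\<And>k z. Dk b k F differentiable at z"
    and maj: "\<And>k. \<exists>w. integrable lborel w \<and> (\<forall>\<xi> s. \<bar>s\<bar> \<le> 1 \<longrightarrow> norm (Dk b k F (\<xi> + s *\<^sub>R b)) \<le> w \<xi>)"
  shows "norm (inv_fourier (Dk b k F) x) = (2 * pi * \<bar>x \<bullet> b\<bar>) ^ k * norm (inv_fourier F x)"
proof (induction k)
  case 0 then show ?case by simp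
next
  case (Suc k)
  obtain w where w: "integrable lborel w" "\<And>\<xi> s. \<bar>s\<bar> \<le> 1 \<Longrightarrow> norm (Dk b k F (\<xi> + s *\<^sub>R b)) \<le> w \<xi>"
    using maj[of k] by blast
  obtain w' where w': "integrable lborel w'" "\<And>\<xi> s. \<bar>s\<bar> \<le> 1 \<Longrightarrow> norm (Dk b (Suc k) F (\<xi> + s *\<^sub>R b)) \<le> w' \<xi>"
    using maj[of "Suc k"] by blast
  have cD: "continuous_on UNIV (dir_deriv b (Dk b k F))"
    using diff_cont[OF dF[of "Suc k"]] by simp
  have "inv_fourier (dir_deriv b (Dk b k F)) x = (\<i> * of_real (- 2 * pi * (x \<bullet> b))) * inv_fourier (Dk b k F) x"
  proof -
    have w'': "\<And>\<xi> s. \<bar>s\<bar> \<le> 1 \<Longrightarrow> norm (dir_deriv b (Dk b k F) (\<xi> + s *\<^sub>R b)) \<le> w' \<xi>"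
      using w'(2) by simp
    show ?thesis by (rule ft_deriv[OF dF cD w(1) w'(1) w(2) w''])
  qed
  then have "norm (inv_fourier (Dk b (Suc k) F) x) = (2 * pi * \<bar>x \<bullet> b\<bar>) * norm (inv_fourier (Dk b k F) x)"
    by (simp add: norm_mult abs_mult)
  then show ?case using Suc.IH by simp
qed

lemma inv_fourier_norm_le:
  fixes f :: "'a::euclidean_space \<Rightarrow> complex"
  shows "norm (inv_fourier f x) \<le> integral\<^sup>L lborel (\<lambda>\<xi>. norm (f \<xi>))"
proof -
  have "norm (inv_fourier f x) \<le> integral\<^sup>L lborel (\<lambda>\<xi>. norm (cis (2 * pi * (x \<bullet> \<xi>)) * f \<xi>))"
    unfolding inv_fourier_def by (rule integral_norm_bound)
  also have "\<dots> = integral\<^sup>L lborel (\<lambda>\<xi>. norm (f \<xi>))"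
    by (simp add: norm_mult)
  finally show ?thesis .
qed

lemma decay_Q:
  assumes A: "weight_sequence A" and \<sigma>: "\<sigma> > 0"
  shows "\<exists>c>0. \<forall>r\<ge>0. exp (- assoc_fun A (\<sigma> * r)) \<le> c / (1 + r) ^ N"
proof -
  define c where "c = 2 ^ N * max 1 (A N / \<sigma> ^ N)"
  have c: "c > 0" unfolding c_def by simp
  have "exp (- assoc_fun A (\<sigma> * r)) \<le> c / (1 + r) ^ N" if r: "r \<ge> 0" for r
  proof (cases "r \<le> 1")
    case True
    have "(1 + r) ^ N \<le> 2 ^ N" using True r by (intro power_mono) auto
    then have "1 \<le> 2 ^ N / (1 + r) ^ N" using r by (simp add: divide_simps)
    also have "\<dots> \<le> c / (1 + r) ^ N" unfolding c_def using r
      by (intro divide_right_mono) (auto simp: mult_le_cancel_left1)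
    finally have one: "1 \<le> c / (1 + r) ^ N" .
    have "exp (- assoc_fun A (\<sigma> * r)) \<le> 1" using exp_neg_assoc_le1[OF A, of "\<sigma> * r"] \<sigma> r by auto
    then show ?thesis using one by linarith
  next
    case False
    then have rp: "r > 0" by auto
    have "exp (- assoc_fun A (\<sigma> * r)) \<le> A N / (\<sigma> * r) ^ N"
      using exp_neg_assoc_le[OF A, of "\<sigma> * r" N] \<sigma> rp by auto
    also have "\<dots> = (A N / \<sigma> ^ N) * (1 / r ^ N)" by (simp add: power_mult_distrib)
    also have "\<dots> \<le> max 1 (A N / \<sigma> ^ N) * (2 ^ N / (1 + r) ^ N)"
    proof (rule mult_mono)
      have "(1 + r) ^ N \<le> (2 * r) ^ N" using False by (intro power_mono) auto
      then show "1 / r ^ N \<le> 2 ^ N / (1 + r) ^ N" using rp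
        by (simp add: divide_simps power_mult_distrib mult.commute)
    qed (use rp in \<open>auto simp: ws_pos[OF A] less_imp_le\<close>)
    also have "\<dots> = c / (1 + r) ^ N" unfolding c_def by simp
    finally show ?thesis .
  qed
  with c show ?thesis by blast
qed

lemma Q_shift_le:
  fixes r r' c :: real
  assumes "r' \<ge> r - 1" "r' \<ge> 0" "r \<ge> 0" "c \<ge> 0"
  shows "c / (1 + r') ^ N \<le> 2 ^ N * c / (1 + r) ^ N"
proof -
  have "(1 + r) ^ N \<le> (2 * (1 + r')) ^ N" using assms by (intro power_mono) auto
  then have "(1 + r) ^ N \<le> 2 ^ N * (1 + r') ^ N" by (simp only: power_mult_distrib)
  then show ?thesis using assms
    by (simp add: divide_simps) (metis mult.assoc mult.commute mult_left_mono)
qed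

lemma separation:
  assumes A: "weight_sequence A" and c0: "c0 \<ge> 1" and H: "H \<ge> 1"
    and M2: "\<And>p q. A (p + q) \<le> c0 * H ^ (p + q) * A p * A q"
    and h: "h > 0" and h2: "2 * H * h \<le> h2"
    and d: "d \<le> a + b'" "0 \<le> d" "0 \<le> a" "0 \<le> b'"
  shows "assoc_fun A (h * d) + assoc_fun A (2 * h * a) \<le> assoc_fun A (h2 * a) + assoc_fun A (h2 * b') + ln c0"
proof -
  have h2p: "0 \<le> h2" using h H h2 mult_pos_pos[of "2 * H" h] by linarith
  define m where "m = max a b'"
  have m: "0 \<le> m" "a \<le> m" "b' \<le> m" "d \<le> 2 * m" using d unfolding m_def by auto
  have "assoc_fun A (h * d) \<le> assoc_fun A (2 * h * m)"
    using m h d by (intro assoc_mono[OF A]) auto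
  moreover have "assoc_fun A (2 * h * a) \<le> assoc_fun A (2 * h * m)"
    using m h d by (intro assoc_mono[OF A]) auto
  moreover have "2 * assoc_fun A (2 * h * m) \<le> assoc_fun A (H * (2 * h * m)) + ln c0"
    using assoc_M2[OF A _ c0 H M2] m h by auto
  moreover have "assoc_fun A (H * (2 * h * m)) \<le> assoc_fun A (h2 * m)"
  proof (rule assoc_mono[OF A])
    have "H * (2 * h * m) = (2 * H * h) * m" by simp
    also have "\<dots> \<le> h2 * m" using h2 m by (intro mult_right_mono) auto
    finally show "H * (2 * h * m) \<le> h2 * m" .
    show "0 \<le> H * (2 * h * m)" using H h m by auto
  qed
  moreover have "assoc_fun A (h2 * m) \<le> assoc_fun A (h2 * a) + assoc_fun A (h2 * b')"
    using assoc_nonneg[OF A, of "h2 * a"] assoc_nonneg[OF A, of "h2 * b'"] d h2p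
    unfolding m_def by (auto simp: max_def)
  ultimately show ?thesis by linarith
qed



lemma exists_big_coord:
  fixes x :: "'a::euclidean_space"
  shows "\<exists>b\<in>Basis. norm x \<le> real DIM('a) * \<bar>x \<bullet> b\<bar>"
proof -
  define m where "m = Max ((\<lambda>b. \<bar>x \<bullet> b\<bar>) ` (Basis :: 'a set))"
  have "m \<in> (\<lambda>b. \<bar>x \<bullet> b\<bar>) ` (Basis :: 'a set)" unfolding m_def
    by (intro Max_in) auto
  then obtain b where b: "b \<in> Basis" "m = \<bar>x \<bullet> b\<bar>" by auto
  have "norm x \<le> (\<Sum>b'\<in>Basis. \<bar>x \<bullet> b'\<bar>)" by (rule norm_le_l1)
  also have "\<dots> \<le> (\<Sum>b'\<in>(Basis :: 'a set). m)"
    unfolding m_def by (intro sum_mono Max_ge) auto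
  also have "\<dots> = real DIM('a) * \<bar>x \<bullet> b\<bar>" using b by simp
  finally show ?thesis using b by blast
qed

lemma per_p:
  fixes M :: "nat \<Rightarrow> real"
  assumes M: "weight_sequence M" and c0: "c0 \<ge> 1" and H: "H \<ge> 1"
    and M2: "\<And>p q. M (p + q) \<le> c0 * H ^ (p + q) * M p * M q"
    and \<rho>: "\<rho> > 0" and \<tau>: "\<tau> > 0" and \<tau>H: "\<tau> * H \<le> \<rho>" and r: "r \<ge> 0" and N: "N \<ge> 0" and K: "K \<ge> 0"
    and G: "\<And>k. (\<rho> * r) ^ k * N \<le> K * M k"
  shows "(\<tau> * r) ^ p / M p * N \<le> K * (2 ^ n2 * max 1 (c0 * H ^ n2 * M n2 / \<rho> ^ n2)) / (1 + r) ^ n2"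
proof -
  have pos: "\<And>k. M k > 0" using ws_pos[OF M] by auto
  define c1 where "c1 = c0 * H ^ n2 * M n2 / \<rho> ^ n2"
  have c1: "c1 \<ge> 0" unfolding c1_def using c0 H pos[of n2] \<rho> by auto
  have tr: "\<tau> / \<rho> \<le> 1" "0 \<le> \<tau> / \<rho>" using \<tau>H H \<tau> \<rho>
    by (auto simp: divide_simps) (smt (verit) mult_le_cancel_left1)
  have eq1: "(\<tau> * r) ^ p = (\<tau> / \<rho>) ^ p * (\<rho> * r) ^ p"
    using \<rho> by (simp add: power_mult_distrib[symmetric])
  have b1: "(\<tau> * r) ^ p / M p * N \<le> K"
  proof -
    have "(\<tau> * r) ^ p / M p * N = (\<tau> / \<rho>) ^ p * ((\<rho> * r) ^ p * N) / M p"
      unfolding eq1 by simp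
    also have "\<dots> \<le> (\<tau> / \<rho>) ^ p * (K * M p) / M p"
      using G[of p] tr pos[of p] by (intro divide_right_mono mult_left_mono) auto
    also have "\<dots> = (\<tau> / \<rho>) ^ p * K" using pos[of p] by simp
    also have "\<dots> \<le> 1 * K" using tr K by (intro mult_right_mono power_le_one) auto
    finally show ?thesis by simp
  qed
  have b2: "(\<tau> * r) ^ p / M p * N \<le> K * c1 / r ^ n2" if rp: "r > 0"
  proof -
    have eq2: "(\<tau> * r) ^ p = (\<tau> / \<rho>) ^ p * (\<rho> * r) ^ (p + n2) / (\<rho> * r) ^ n2"
      using \<rho> rp by (simp add: power_add power_mult_distrib[symmetric])
    have "(\<tau> * r) ^ p / M p * N = (\<tau> / \<rho>) ^ p * ((\<rho> * r) ^ (p + n2) * N) / ((\<rho> * r) ^ n2 * M p)"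
      unfolding eq2 by simp
    also have "\<dots> \<le> (\<tau> / \<rho>) ^ p * (K * (c0 * H ^ (p + n2) * M p * M n2)) / ((\<rho> * r) ^ n2 * M p)"
    proof (intro divide_right_mono mult_left_mono)
      show "(\<rho> * r) ^ (p + n2) * N \<le> K * (c0 * H ^ (p + n2) * M p * M n2)"
        using G[of "p + n2"] M2[of p n2] K by (meson mult_left_mono order_trans)
    qed (use tr pos[of p] \<rho> rp in auto)
    also have "\<dots> = ((\<tau> * H) / \<rho>) ^ p * (K * c1 / r ^ n2)"
      unfolding c1_def using pos[of p] \<rho> rp
      by (simp add: power_add power_mult_distrib divide_simps)
    also have "\<dots> \<le> 1 * (K * c1 / r ^ n2)"
      using \<tau>H \<rho> \<tau> H K c1 rp by (intro mult_right_mono power_le_one) (auto simp: divide_simps)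
    finally show ?thesis by simp
  qed
  show ?thesis
  proof (cases "r \<le> 1")
    case True
    have "(1 + r) ^ n2 \<le> 2 ^ n2" using True r by (intro power_mono) auto
    then have "1 \<le> 2 ^ n2 / (1 + r) ^ n2" using r by (simp add: divide_simps)
    also have "\<dots> \<le> (2 ^ n2 * max 1 c1) / (1 + r) ^ n2" using r
      by (intro divide_right_mono) (auto simp: mult_le_cancel_left1)
    finally have "K * 1 \<le> K * ((2 ^ n2 * max 1 c1) / (1 + r) ^ n2)" using K by (intro mult_left_mono) auto
    then show ?thesis using b1 unfolding c1_def by simp
  next
    case False
    then have rp: "r > 0" by simp
    have "(1 + r) ^ n2 \<le> (2 * r) ^ n2" using False by (intro power_mono) auto
    then have "1 / r ^ n2 \<le> 2 ^ n2 / (1 + r) ^ n2" using rp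
      by (simp add: divide_simps power_mult_distrib mult.commute)
    then have "c1 / r ^ n2 \<le> (2 ^ n2 * max 1 c1) / (1 + r) ^ n2"
      using c1 rp
    proof -
      have "c1 / r ^ n2 \<le> max 1 c1 * (1 / r ^ n2)" using rp c1 by (simp add: divide_right_mono)
      also have "\<dots> \<le> max 1 c1 * (2 ^ n2 / (1 + r) ^ n2)"
        using \<open>1 / r ^ n2 \<le> 2 ^ n2 / (1 + r) ^ n2\<close> by (intro mult_left_mono) auto
      finally show ?thesis by (simp add: mult.commute)
    qed
    then have "K * (c1 / r ^ n2) \<le> K * ((2 ^ n2 * max 1 c1) / (1 + r) ^ n2)" using K by (intro mult_left_mono) auto
    then show ?thesis using b2[OF rp] unfolding c1_def by simp
  qed
qed



lemma prod_diff:
  fixes F G :: "'a::euclidean_space \<Rightarrow> complex"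
  assumes dF: "\<And>k x. Dk b k F differentiable at x" and dG: "\<And>k x. Dk b k G differentiable at x"
  shows "Dk b k (\<lambda>x. F x * G x) differentiable at z"
  unfolding leibniz[OF dF dG] using dF dG by (intro differentiable_sum differentiable_mult) auto

lemma prod_bound:
  fixes F G :: "'a::euclidean_space \<Rightarrow> complex"
  assumes M: "weight_sequence M" and h2: "h2 > 0" and C: "C \<ge> 0"
    and dF: "\<And>k x. Dk b k F differentiable at x" and dG: "\<And>k x. Dk b k G differentiable at x"
    and bF: "\<And>k x. norm (Dk b k F x) \<le> C * M k / h2 ^ k * eF x"
    and bG: "\<And>k x. norm (Dk b k G x) \<le> C * M k / h2 ^ k * eG x"
    and eF: "\<And>x. eF x \<ge> 0" and eG: "\<And>x. eG x \<ge> 0"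
  shows "norm (Dk b k (\<lambda>x. F x * G x) x) \<le> C\<^sup>2 * 2 ^ k * M k / h2 ^ k * (eF x * eG x)"
proof -
  have pos: "\<And>k. M k > 0" using ws_pos[OF M] by auto
  have "norm (Dk b k (\<lambda>x. F x * G x) x) \<le> (\<Sum>i\<le>k. norm (of_nat (k choose i) * Dk b i F x * Dk b (k - i) G x))"
    unfolding leibniz[OF dF dG] by (rule norm_sum)
  also have "\<dots> \<le> (\<Sum>i\<le>k. real (k choose i) * (C\<^sup>2 * M k / h2 ^ k * (eF x * eG x)))"
  proof (rule sum_mono)
    fix i assume i: "i \<in> {..k}"
    have "norm (Dk b i F x) * norm (Dk b (k - i) G x) \<le> (C * M i / h2 ^ i * eF x) * (C * M (k - i) / h2 ^ (k - i) * eG x)"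
      by (intro mult_mono bF bG) (use C pos[of i] h2 eF[of x] in auto)
    also have "\<dots> = C\<^sup>2 * (M i * M (k - i)) / (h2 ^ i * h2 ^ (k - i)) * (eF x * eG x)"
      by (simp add: power2_eq_square)
    also have "\<dots> \<le> C\<^sup>2 * M k / h2 ^ k * (eF x * eG x)"
    proof -
      have "M i * M (k - i) \<le> M k" using ws_mult[OF M, of i "k - i"] i by simp
      moreover have "h2 ^ i * h2 ^ (k - i) = h2 ^ k" using i by (simp add: power_add[symmetric])
      ultimately have "C\<^sup>2 * (M i * M (k - i)) / (h2 ^ i * h2 ^ (k - i)) \<le> C\<^sup>2 * M k / h2 ^ k"
        using h2 by (simp add: divide_right_mono mult_left_mono)
      then show ?thesis using eF[of x] eG[of x] by (intro mult_right_mono) auto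
    qed
    finally have "real (k choose i) * (norm (Dk b i F x) * norm (Dk b (k - i) G x)) \<le> real (k choose i) * (C\<^sup>2 * M k / h2 ^ k * (eF x * eG x))"
      by (intro mult_left_mono) auto
    then show "norm (of_nat (k choose i) * Dk b i F x * Dk b (k - i) G x) \<le> real (k choose i) * (C\<^sup>2 * M k / h2 ^ k * (eF x * eG x))"
      by (simp only: norm_mult norm_of_nat mult.assoc)
  qed
  also have "\<dots> = C\<^sup>2 * 2 ^ k * M k / h2 ^ k * (eF x * eG x)"
  proof -
    have "(\<Sum>i\<le>k. real (k choose i) * (C\<^sup>2 * M k / h2 ^ k * (eF x * eG x)))
        = (\<Sum>i\<le>k. real (k choose i)) * (C\<^sup>2 * M k / h2 ^ k * (eF x * eG x))"
      by (rule sum_distrib_right[symmetric])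
    also have "(\<Sum>i\<le>k. real (k choose i)) = 2 ^ k"
      using choose_row_sum[of k] by (metis of_nat_numeral of_nat_power of_nat_sum)
    finally show ?thesis by simp
  qed
  finally show ?thesis .
qed



lemma core:
  fixes \<psi> :: "'i \<Rightarrow> 'a::euclidean_space \<Rightarrow> complex" and y :: "'i \<Rightarrow> 'a" and \<eta> :: "'a \<Rightarrow> real"
  assumes M: "weight_sequence M" and A: "weight_sequence A"
    and sm: "\<And>l. smooth_fun (\<psi> l)"
    and psib: "\<And>l bs x. set bs \<subseteq> Basis \<Longrightarrow> h2 ^ length bs * norm (iter_deriv bs (\<psi> l) x) * exp (assoc_fun A (h2 * norm (x - y l))) / M (length bs) \<le> C"
    and c0A: "c0A \<ge> 1" and HA: "HA \<ge> 1" and M2A: "\<And>p q. A (p + q) \<le> c0A * HA ^ (p + q) * A p * A q"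
    and c0M: "c0M \<ge> 1" and HM: "HM \<ge> 1" and M2M: "\<And>p q. M (p + q) \<le> c0M * HM ^ (p + q) * M p * M q"
    and h: "h > 0" and h2: "2 * HA * h \<le> h2" and \<tau>: "\<tau> > 0" and \<tau>h2: "\<tau> * HM * real DIM('a) \<le> pi * h2"
    and \<eta>pos: "\<And>x. \<eta> x > 0" and C\<eta>: "C\<eta> > 0"
    and \<eta>b: "\<And>x z. \<eta> (x + z) \<le> C\<eta> * \<eta> x * exp (assoc_fun M (\<tau> * norm z))"
  shows "\<exists>B. B < \<infinity> \<and> (\<forall>l m. ennreal (exp (assoc_fun A (h * norm (y l - y m)))) * FL1_norm \<eta> (\<lambda>x. \<psi> l x * \<psi> m x) \<le> B)"
proof -
  define n where "n = DIM('a)"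
  have n: "n \<ge> 1" unfolding n_def by (simp add: DIM_positive Suc_leI)
  have h2p: "h2 > 0" using h HA h2 mult_pos_pos[of "2 * HA" h] by linarith
  have posM: "\<And>k. M k > 0" using ws_pos[OF M] by auto
  have Cnn: "C \<ge> 0"
  proof -
    have "h2 ^ length ([]::'a list) * norm (iter_deriv [] (\<psi> undefined) 0) * exp (assoc_fun A (h2 * norm (0 - y undefined))) / M (length ([]::'a list)) \<le> C"
      by (rule psib) simp
    moreover have "0 \<le> h2 ^ length ([]::'a list) * norm (iter_deriv [] (\<psi> undefined) 0) * exp (assoc_fun A (h2 * norm (0 - y undefined))) / M (length ([]::'a list))"
      using posM[of 0] h2p by simp
    ultimately show ?thesis by linarith
  qed
  have dpsi: "norm (Dk b k (\<psi> l) x) \<le> C * M k / h2 ^ k * exp (- assoc_fun A (h2 * norm (x - y l)))"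
    if b: "b \<in> Basis" for b k l x
  proof -
    have "set (replicate k b) \<subseteq> Basis" using b by (induct k) auto
    from psib[OF this, of l x]
    have "h2 ^ k * norm (Dk b k (\<psi> l) x) * exp (assoc_fun A (h2 * norm (x - y l))) / M k \<le> C" by simp
    then have "h2 ^ k * norm (Dk b k (\<psi> l) x) * exp (assoc_fun A (h2 * norm (x - y l))) \<le> C * M k"
      using posM[of k] by (simp add: divide_simps)
    then have "norm (Dk b k (\<psi> l) x) \<le> C * M k / (h2 ^ k * exp (assoc_fun A (h2 * norm (x - y l))))"
      using h2p by (simp add: divide_simps mult_ac)
    then show ?thesis by (simp add: exp_minus divide_simps)
  qed
  have dd: "\<And>l b k z. b \<in> Basis \<Longrightarrow> Dk b k (\<psi> l) differentiable at z"
    using smooth_Dk_diff sm by blast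
  obtain cd where cd: "cd > 0" "\<And>r. r \<ge> 0 \<Longrightarrow> exp (- assoc_fun A (h2 * r)) \<le> cd / (1 + r) ^ (2 * n)"
    using decay_Q[OF A h2p, of "2 * n"] by blast
  obtain cd2 where cd2: "cd2 > 0" "\<And>r. r \<ge> 0 \<Longrightarrow> exp (- assoc_fun A ((2 * h) * r)) \<le> cd2 / (1 + r) ^ (2 * n)"
    using decay_Q[OF A, of "2 * h" "2 * n"] h by auto
  have Qge: "1 / (1 + norm x) ^ (2 * n) \<le> Qf x" for x :: 'a using Qf_ge[of x] unfolding n_def .
  define IQ where "IQ = integral\<^sup>L lborel (Qf :: 'a \<Rightarrow> real)"
  have IQ: "IQ \<ge> 0" unfolding IQ_def using Qf_pos by (intro integral_nonneg_AE) (auto intro: less_imp_le)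
  define K0 where "K0 = C\<^sup>2 * c0A * cd2 * IQ"
  have K0: "K0 \<ge> 0" unfolding K0_def using c0A cd2 IQ by auto
  define \<rho> where "\<rho> = pi * h2 / real n"
  have \<rho>: "\<rho> > 0" unfolding \<rho>_def using h2p n by auto
  define c2 where "c2 = 2 ^ (2 * n) * max 1 (c0M * HM ^ (2 * n) * M (2 * n) / \<rho> ^ (2 * n))"
  have c2: "c2 > 0" unfolding c2_def by simp
  define B0 where "B0 = C\<eta> * \<eta> 0 * K0 * c2"
  have B0: "B0 \<ge> 0" unfolding B0_def using C\<eta> \<eta>pos[of 0] K0 c2 by auto
  define IQn where "IQn = (\<integral>\<^sup>+x. ennreal (Qf x) \<partial>(lborel :: 'a measure))"
  have IQn: "IQn < \<infinity>"
  proof -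
    have "(\<integral>\<^sup>+x. ennreal (norm (Qf x)) \<partial>(lborel :: 'a measure)) < \<infinity>"
      using Qf_integrable unfolding integrable_iff_bounded by blast
    moreover have "(\<integral>\<^sup>+x. ennreal (norm (Qf x)) \<partial>(lborel :: 'a measure)) = IQn"
      unfolding IQn_def
    proof (intro nn_integral_cong)
      fix x :: 'a show "ennreal (norm (Qf x)) = ennreal (Qf x)" using Qf_pos[of x] by simp
    qed
    ultimately show ?thesis by simp
  qed
  have main: "ennreal (exp (assoc_fun A (h * norm (y l - y m)))) * FL1_norm \<eta> (\<lambda>x. \<psi> l x * \<psi> m x) \<le> ennreal B0 * IQn"
    for l m
  proof -
    define \<phi> where "\<phi> = (\<lambda>x. \<psi> l x * \<psi> m x)"
    define d where "d = norm (y l - y m)"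
    define e where "e = exp (- assoc_fun A (h * d))"
    have e: "e > 0" unfolding e_def by simp
    have pw: "\<eta> x * norm (inv_fourier \<phi> x) \<le> B0 * e * Qf x" for x
    proof -
      obtain b where b: "b \<in> Basis" "norm x \<le> real n * \<bar>x \<bullet> b\<bar>"
        using exists_big_coord[of x] unfolding n_def by blast
      have nb: "norm b = 1" using b(1) by simp
      have dphi: "\<And>k z. Dk b k \<phi> differentiable at z"
        unfolding \<phi>_def by (rule prod_diff) (use dd b(1) in auto)
      define ea where "ea = (\<lambda>\<xi>. exp (- assoc_fun A (h2 * norm (\<xi> - y l))))"
      define eb where "eb = (\<lambda>\<xi>. exp (- assoc_fun A (h2 * norm (\<xi> - y m))))"
      have bphi: "norm (Dk b k \<phi> \<xi>) \<le> C\<^sup>2 * 2 ^ k * M k / h2 ^ k * (ea \<xi> * eb \<xi>)" for k \<xi>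
        unfolding \<phi>_def
        by (rule prod_bound[OF M h2p Cnn]) (use dd b(1) dpsi in \<open>auto simp: ea_def eb_def\<close>)
      have eb1: "eb \<xi> \<le> 1" for \<xi> unfolding eb_def using exp_neg_assoc_le1[OF A] h2p by simp
      have ea0: "ea \<xi> \<ge> 0" for \<xi> unfolding ea_def by simp
      have eb0: "eb \<xi> \<ge> 0" for \<xi> unfolding eb_def by simp
      have Kk0: "C\<^sup>2 * 2 ^ k * M k / h2 ^ k \<ge> 0" for k using posM[of k] h2p by simp
      define W where "W = (\<lambda>k \<xi>. C\<^sup>2 * 2 ^ k * M k / h2 ^ k * (2 ^ (2 * n) * cd) * Qf (\<xi> - y l))"
      have Wint: "integrable lborel (W k)" for k
        unfolding W_def by (intro integrable_mult_right Qf_shift_integrable)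
      have Wb: "norm (Dk b k \<phi> (\<xi> + s *\<^sub>R b)) \<le> W k \<xi>" if s: "\<bar>s\<bar> \<le> 1" for k \<xi> s
      proof -
        define r where "r = norm (\<xi> - y l)"
        define r' where "r' = norm (\<xi> + s *\<^sub>R b - y l)"
        have rr: "r' \<ge> r - 1"
        proof -
          have "r \<le> r' + norm (- (s *\<^sub>R b))" unfolding r_def r'_def
            using norm_triangle_ineq[of "\<xi> + s *\<^sub>R b - y l" "- (s *\<^sub>R b)"] by (simp add: algebra_simps)
          then show ?thesis using s nb by simp
        qed
        have "ea (\<xi> + s *\<^sub>R b) * eb (\<xi> + s *\<^sub>R b) \<le> ea (\<xi> + s *\<^sub>R b)"
          using eb1 ea0 by (simp add: mult_left_le)
        also have "\<dots> \<le> cd / (1 + r') ^ (2 * n)" unfolding ea_def r'_def by (rule cd(2)) simp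
        also have "\<dots> \<le> 2 ^ (2 * n) * cd / (1 + r) ^ (2 * n)"
          by (rule Q_shift_le) (use rr cd in \<open>auto simp: r_def r'_def\<close>)
        also have "\<dots> = (2 ^ (2 * n) * cd) * (1 / (1 + r) ^ (2 * n))" by simp
        also have "\<dots> \<le> (2 ^ (2 * n) * cd) * Qf (\<xi> - y l)"
          using Qge[of "\<xi> - y l"] cd unfolding r_def by (intro mult_left_mono) auto
        finally have ee: "ea (\<xi> + s *\<^sub>R b) * eb (\<xi> + s *\<^sub>R b) \<le> (2 ^ (2 * n) * cd) * Qf (\<xi> - y l)" .
        have "norm (Dk b k \<phi> (\<xi> + s *\<^sub>R b)) \<le> C\<^sup>2 * 2 ^ k * M k / h2 ^ k * (ea (\<xi> + s *\<^sub>R b) * eb (\<xi> + s *\<^sub>R b))"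
          by (rule bphi)
        also have "\<dots> \<le> C\<^sup>2 * 2 ^ k * M k / h2 ^ k * ((2 ^ (2 * n) * cd) * Qf (\<xi> - y l))"
          by (rule mult_left_mono[OF ee Kk0])
        finally show ?thesis unfolding W_def by (simp add: mult.assoc)
      qed
      have maj: "\<exists>w. integrable lborel w \<and> (\<forall>\<xi> s. \<bar>s\<bar> \<le> 1 \<longrightarrow> norm (Dk b k \<phi> (\<xi> + s *\<^sub>R b)) \<le> w \<xi>)" for k
        using Wint Wb by blast
      have FI: "norm (inv_fourier (Dk b k \<phi>) x) = (2 * pi * \<bar>x \<bullet> b\<bar>) ^ k * norm (inv_fourier \<phi> x)" for k
        by (rule ft_iter[OF dphi maj])
      have intD: "integral\<^sup>L lborel (\<lambda>\<xi>. norm (Dk b k \<phi> \<xi>)) \<le> K0 * 2 ^ k * M k / h2 ^ k * e" for k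
      proof -
        define Kk where "Kk = C\<^sup>2 * 2 ^ k * M k / h2 ^ k"
        have Kk: "Kk \<ge> 0" unfolding Kk_def by (rule Kk0)
        have pt: "norm (Dk b k \<phi> \<xi>) \<le> Kk * (c0A * e * cd2) * Qf (\<xi> - y l)" for \<xi>
        proof -
          define a where "a = norm (\<xi> - y l)"
          define a' where "a' = norm (\<xi> - y m)"
          have da: "d \<le> a + a'" unfolding d_def a_def a'_def
            using norm_triangle_ineq[of "y l - \<xi>" "\<xi> - y m"] by (simp add: norm_minus_commute)
          have sep: "assoc_fun A (h * d) + assoc_fun A (2 * h * a) \<le> assoc_fun A (h2 * a) + assoc_fun A (h2 * a') + ln c0A"
            by (rule separation[OF A c0A HA M2A h h2 da]) (auto simp: d_def a_def a'_def)
          have "ea \<xi> * eb \<xi> = exp (- (assoc_fun A (h2 * a) + assoc_fun A (h2 * a')))"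
            unfolding ea_def eb_def a_def a'_def by (simp add: exp_add[symmetric])
          also have "\<dots> \<le> exp (- (assoc_fun A (h * d) + assoc_fun A (2 * h * a) - ln c0A))"
            using sep by simp
          also have "\<dots> = c0A * e * exp (- assoc_fun A (2 * h * a))"
            unfolding e_def using c0A by (simp add: exp_diff exp_add exp_minus divide_inverse)
          also have "\<dots> \<le> c0A * e * (cd2 * Qf (\<xi> - y l))"
          proof (rule mult_left_mono)
            have "exp (- assoc_fun A (2 * h * a)) \<le> cd2 / (1 + a) ^ (2 * n)"
              using cd2(2)[of a] unfolding a_def by simp
            also have "\<dots> = cd2 * (1 / (1 + a) ^ (2 * n))" by simp
            also have "\<dots> \<le> cd2 * Qf (\<xi> - y l)"
              using Qge[of "\<xi> - y l"] cd2 unfolding a_def by (intro mult_left_mono) auto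
            finally show "exp (- assoc_fun A (2 * h * a)) \<le> cd2 * Qf (\<xi> - y l)" .
          qed (use c0A e in auto)
          finally have ee: "ea \<xi> * eb \<xi> \<le> c0A * e * (cd2 * Qf (\<xi> - y l))" .
          have "norm (Dk b k \<phi> \<xi>) \<le> Kk * (ea \<xi> * eb \<xi>)" unfolding Kk_def by (rule bphi)
          also have "\<dots> \<le> Kk * (c0A * e * (cd2 * Qf (\<xi> - y l)))" by (rule mult_left_mono[OF ee Kk])
          finally show ?thesis by (simp add: mult.assoc)
        qed
        have intR: "integrable lborel (\<lambda>\<xi>. Kk * (c0A * e * cd2) * Qf (\<xi> - y l))"
          by (intro integrable_mult_right Qf_shift_integrable)
        have intL: "integrable lborel (\<lambda>\<xi>. norm (Dk b k \<phi> \<xi>))"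
        proof -
          have "integrable lborel (Dk b k \<phi>)"
          proof (rule Bochner_Integration.integrable_bound[OF Wint[of k]])
            show "Dk b k \<phi> \<in> borel_measurable lborel" by (rule cont_meas[OF diff_cont[OF dphi]])
            show "AE \<xi> in lborel. norm (Dk b k \<phi> \<xi>) \<le> norm (W k \<xi>)"
              using Wb[of 0 k] by (auto intro: order_trans[OF _ abs_ge_self])
          qed
          then show ?thesis by (rule integrable_norm)
        qed
        have "integral\<^sup>L lborel (\<lambda>\<xi>. norm (Dk b k \<phi> \<xi>)) \<le> integral\<^sup>L lborel (\<lambda>\<xi>. Kk * (c0A * e * cd2) * Qf (\<xi> - y l))"
          by (rule integral_mono[OF intL intR pt])
        also have "\<dots> = Kk * (c0A * e * cd2) * IQ"
          unfolding IQ_def by (simp add: Qf_shift_integral)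
        also have "\<dots> = K0 * 2 ^ k * M k / h2 ^ k * e"
          unfolding Kk_def K0_def by (simp add: algebra_simps)
        finally show ?thesis .
      qed
      define N where "N = norm (inv_fourier \<phi> x)"
      define r where "r = norm x"
      have N0: "N \<ge> 0" "r \<ge> 0" unfolding N_def r_def by auto
      have G: "(\<rho> * r) ^ k * N \<le> (K0 * e) * M k" for k
      proof -
        have "\<rho> * r \<le> pi * h2 * \<bar>x \<bullet> b\<bar>"
        proof -
          have "\<rho> * r = pi * h2 * (r / real n)" unfolding \<rho>_def by simp
          also have "\<dots> \<le> pi * h2 * \<bar>x \<bullet> b\<bar>"
            using b(2) n h2p unfolding r_def by (intro mult_left_mono) (auto simp: divide_simps mult.commute)
          finally show ?thesis .
        qed
        then have "(\<rho> * r) ^ k \<le> (pi * h2 * \<bar>x \<bullet> b\<bar>) ^ k" using \<rho> N0 by (intro power_mono) auto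
        then have "(\<rho> * r) ^ k * N \<le> (pi * h2 * \<bar>x \<bullet> b\<bar>) ^ k * N" using N0 by (intro mult_right_mono) auto
        also have "\<dots> = (h2 / 2) ^ k * ((2 * pi * \<bar>x \<bullet> b\<bar>) ^ k * N)"
          by (simp add: power_mult_distrib[symmetric] mult_ac)
        also have "\<dots> = (h2 / 2) ^ k * norm (inv_fourier (Dk b k \<phi>) x)" using FI[of k] unfolding N_def by simp
        also have "\<dots> \<le> (h2 / 2) ^ k * integral\<^sup>L lborel (\<lambda>\<xi>. norm (Dk b k \<phi> \<xi>))"
          by (intro mult_left_mono inv_fourier_norm_le) (use h2p in simp)
        also have "\<dots> \<le> (h2 / 2) ^ k * (K0 * 2 ^ k * M k / h2 ^ k * e)"
          by (intro mult_left_mono intD) (use h2p in simp)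
        also have "\<dots> = K0 * e * M k" using h2p by (simp add: power_divide)
        finally show ?thesis .
      qed
      have \<tau>\<rho>: "\<tau> * HM \<le> \<rho>" unfolding \<rho>_def using \<tau>h2 n by (simp add: field_simps n_def)
      have pp: "(\<tau> * r) ^ p / M p * N \<le> (K0 * e) * c2 / (1 + r) ^ (2 * n)" for p
        unfolding c2_def by (rule per_p[OF M c0M HM M2M \<rho> \<tau> \<tau>\<rho> N0(2) N0(1) _ G]) (use K0 e in auto)
      have "exp (assoc_fun M (\<tau> * r)) * N \<le> (K0 * e) * c2 / (1 + r) ^ (2 * n)"
        by (rule assoc_le_from_terms[OF M _ N0(1) pp]) (use N0 \<tau> in auto)
      also have "\<dots> = (K0 * e * c2) * (1 / (1 + r) ^ (2 * n))" by simp
      also have "\<dots> \<le> (K0 * e * c2) * Qf x" using Qge[of x] K0 e c2 unfolding r_def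
        by (intro mult_left_mono) auto
      finally have eM: "exp (assoc_fun M (\<tau> * r)) * N \<le> K0 * e * c2 * Qf x" .
      have "\<eta> x \<le> C\<eta> * \<eta> 0 * exp (assoc_fun M (\<tau> * r))" using \<eta>b[of 0 x] unfolding r_def by simp
      then have "\<eta> x * N \<le> C\<eta> * \<eta> 0 * exp (assoc_fun M (\<tau> * r)) * N" using N0 by (intro mult_right_mono) auto
      also have "\<dots> = C\<eta> * \<eta> 0 * (exp (assoc_fun M (\<tau> * r)) * N)" by simp
      also have "\<dots> \<le> C\<eta> * \<eta> 0 * (K0 * e * c2 * Qf x)" using eM C\<eta> \<eta>pos[of 0] by (intro mult_left_mono) auto
      also have "\<dots> = B0 * e * Qf x" unfolding B0_def by simp
      finally show ?thesis unfolding N_def .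
    qed
    have "FL1_norm \<eta> \<phi> \<le> (\<integral>\<^sup>+x. ennreal (B0 * e) * ennreal (Qf x) \<partial>(lborel :: 'a measure))"
      unfolding FL1_norm_def
    proof (rule nn_integral_mono)
      fix x
      show "ennreal (\<eta> x * norm (inv_fourier \<phi> x)) \<le> ennreal (B0 * e) * ennreal (Qf x)"
        using pw[of x] B0 e Qf_pos[of x] by (simp add: ennreal_mult[symmetric] ennreal_leI)
    qed
    also have "\<dots> = ennreal (B0 * e) * IQn"
    proof -
      have "Qf \<in> borel_measurable (borel :: 'a measure)" by (rule borel_measurable_continuous_onI[OF Qf_cont])
      then have "(\<lambda>x. ennreal (Qf x)) \<in> borel_measurable (borel :: 'a measure)" by measurable
      then show ?thesis unfolding IQn_def by (intro nn_integral_cmult) simp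
    qed
    finally have "ennreal (exp (assoc_fun A (h * d))) * FL1_norm \<eta> \<phi> \<le> ennreal (exp (assoc_fun A (h * d))) * (ennreal (B0 * e) * IQn)"
      by (rule mult_left_mono) simp
    also have "\<dots> = ennreal (exp (assoc_fun A (h * d)) * (B0 * e)) * IQn"
      using B0 e by (simp add: ennreal_mult mult.assoc)
    also have "exp (assoc_fun A (h * d)) * (B0 * e) = B0"
      unfolding e_def by (simp add: exp_minus)
    finally show ?thesis unfolding \<phi>_def d_def .
  qed
  show ?thesis
    using IQn main by (intro exI[of _ "ennreal B0 * IQn"]) (auto simp: ennreal_mult_less_top)
qed



lemma sup_fin:
  fixes f :: "'i \<Rightarrow> 'i \<Rightarrow> ennreal"
  assumes "\<exists>B. B < \<infinity> \<and> (\<forall>l m. f l m \<le> B)"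
  shows "(SUP (l, m) \<in> UNIV. f l m) < \<infinity>"
proof -
  obtain B where B: "B < \<infinity>" "\<And>l m. f l m \<le> B" using assms by blast
  have "(SUP (l, m) \<in> UNIV. f l m) \<le> B" by (rule SUP_least) (auto simp: B(2))
  then show ?thesis using B(1) by (rule le_less_trans)
qed

theorem lemma3p8:
  fixes c :: ultra_case
    and M A :: "nat \<Rightarrow> real"
    and \<eta> :: "'a::euclidean_space \<Rightarrow> real"
    and \<psi> :: "'i::countable \<Rightarrow> 'a \<Rightarrow> complex"
    and y :: "'i \<Rightarrow> 'a"
  assumes "weight_sequence M" and "weight_sequence A" and "cond_M2_star A"
    and "weight_of_class c M \<eta>"
    and "UCPU c M A \<psi> y"
  shows "let bnd = (\<lambda>h. (SUP (l, m) \<in> UNIV.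
                 ennreal (exp (assoc_fun A (h * norm (y l - y m)))) * FL1_norm \<eta> (\<lambda>x. \<psi> l x * \<psi> m x)) < \<infinity>)
         in case c of Beurling \<Rightarrow> (\<forall>h>0. bnd h) | Roumieu \<Rightarrow> (\<exists>h>0. bnd h)"
proof -
  note M = assms(1) and A = assms(2)
  obtain c0A HA where cA: "c0A \<ge> 1" "HA \<ge> 1" "\<And>p q. A (p + q) \<le> c0A * HA ^ (p + q) * A p * A q"
    using ws_M2[OF A] by blast
  obtain c0M HM where cM: "c0M \<ge> 1" "HM \<ge> 1" "\<And>p q. M (p + q) \<le> c0M * HM ^ (p + q) * M p * M q"
    using ws_M2[OF M] by blast
  have \<eta>pos: "\<And>x. \<eta> x > 0" using assms(4) unfolding weight_of_class_def by auto
  have sm: "\<And>l. smooth_fun (\<psi> l)" using assms(5) unfolding UCPU_def in_S_def by auto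
  define n where "n = real DIM('a)"
  have n: "n \<ge> 1" unfolding n_def by (simp add: DIM_positive Suc_leI)
  let ?bnd = "\<lambda>h. (SUP (l, m) \<in> UNIV.
                 ennreal (exp (assoc_fun A (h * norm (y l - y m)))) * FL1_norm \<eta> (\<lambda>x. \<psi> l x * \<psi> m x)) < \<infinity>"
  let ?pb = "\<lambda>h2. \<exists>C. \<forall>l bs x. set bs \<subseteq> Basis \<longrightarrow>
           h2 ^ length bs * norm (iter_deriv bs (\<psi> l) x) * exp (assoc_fun A (h2 * norm (x - y l)))
             / M (length bs) \<le> C"
  have key: "?bnd h" if h: "h > 0" and h2: "2 * HA * h \<le> h2" and \<tau>: "\<tau> > 0"
      and \<tau>h2: "\<tau> * HM * n \<le> pi * h2" and pb: "?pb h2" and C\<eta>: "C\<eta> > 0"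
      and \<eta>b: "\<And>x z. \<eta> (x + z) \<le> C\<eta> * \<eta> x * exp (assoc_fun M (\<tau> * norm z))" for h h2 \<tau> C\<eta>
  proof -
    obtain C where C: "\<And>l bs x. set bs \<subseteq> Basis \<Longrightarrow> h2 ^ length bs * norm (iter_deriv bs (\<psi> l) x) * exp (assoc_fun A (h2 * norm (x - y l))) / M (length bs) \<le> C"
      using pb by blast
    have t2: "\<tau> * HM * real DIM('a) \<le> pi * h2" using \<tau>h2 unfolding n_def .
    show ?thesis
      by (rule sup_fin, rule core[OF M A sm C cA cM h h2 \<tau> t2 \<eta>pos C\<eta> \<eta>b])
  qed
  show ?thesis
  proof (cases c)
    case Beurling
    obtain C\<eta> \<tau> where w: "C\<eta> > 0" "\<tau> > 0" "\<And>x z. \<eta> (x + z) \<le> C\<eta> * \<eta> x * exp (assoc_fun M (\<tau> * norm z))"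
      using assms(4) Beurling unfolding weight_of_class_def by auto
    have pbB: "\<And>h2. h2 > 0 \<Longrightarrow> ?pb h2" using assms(5) Beurling unfolding UCPU_def Let_def by auto
    have "?bnd h" if h: "h > 0" for h
    proof -
      define h2 where "h2 = max (2 * HA * h) (\<tau> * HM * n / pi)"
      have "2 * HA * h > 0" using h cA by simp
      then have h2p: "h2 > 0" unfolding h2_def by (simp add: less_max_iff_disj)
      show ?thesis
      proof (rule key[OF h _ w(2) _ pbB[OF h2p] w(1) w(3)])
        show "2 * HA * h \<le> h2" unfolding h2_def by simp
        have "\<tau> * HM * n / pi \<le> h2" unfolding h2_def by simp
        then show "\<tau> * HM * n \<le> pi * h2" by (simp add: divide_simps mult.commute)
      qed
    qed
    then show ?thesis using Beurling by (simp add: Let_def)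
  next
    case Roumieu
    obtain h2 where h2: "h2 > 0" "?pb h2" using assms(5) Roumieu unfolding UCPU_def Let_def by auto
    define h where "h = h2 / (2 * HA)"
    define \<tau> where "\<tau> = pi * h2 / (HM * n)"
    have h: "h > 0" unfolding h_def using h2 cA by auto
    have \<tau>: "\<tau> > 0" unfolding \<tau>_def using h2 cM n by auto
    obtain C\<eta> where w: "C\<eta> > 0" "\<And>x z. \<eta> (x + z) \<le> C\<eta> * \<eta> x * exp (assoc_fun M (\<tau> * norm z))"
      using assms(4) Roumieu \<tau> unfolding weight_of_class_def by auto
    have "?bnd h"
    proof (rule key[OF h _ \<tau> _ h2(2) w(1) w(2)])
      show "2 * HA * h \<le> h2" unfolding h_def using cA by simp
      show "\<tau> * HM * n \<le> pi * h2" unfolding \<tau>_def using cM n by simp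
    qed
    then show ?thesis using Roumieu h by (auto simp: Let_def)
  qed
qed


end
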